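(* Let $p,q$ be natural numbers and let $T=T_v$ with $v=\{(p_n,\ell_n,q_n,m_n):n\in\mathbb N\}\in\mathcal W$. If the set $$\Big\{n\in\mathbb N:\ \frac{q_n}{q}=\frac{p_n}{p}\in\mathbb N\Big\}$$ is infinite, then $T^p\times T^q$ and $T^{-p}\times T^q$ are conservative.
   Context: Rank-one construction (cutting and stacking): let $a_n,b_n,c_n,d_n$ ($n\ge 0$) be sequences of positive integers. Let $G_0$ be the unit interval $[0,1)$, a column of height $H_0=1$ (set $h_0=1$). Given the column $G_n$ of height $H_n$, form $G_{n+1}$ by cutting $G_n$ into four subcolumns of equal width, placing $a_n,b_n,c_n,d_n$ spacers on top of the first, second, third and fourth subcolumns respectively, and stacking the subcolumns from left to right. This defines a Lebesgue-measure-preserving invertible transformation $T$ on a subset of $\mathbb R$ with Lebesgue measure $\mu$. Put $p_n=H_n+a_n$, $\ell_n=H_n+b_n$, $q_n=H_n+c_n$, $m_n=H_n+d_n$ and $h_{n+1}=p_n+\ell_n+q_n+H_n$. Write $T=T_v$ with $v=\{(p_n,\ell_n,q_n,m_n)\}$. $\mathcal W$ is the set of such $v$ with $\lim p_n/h_n=\infty$, $\ell_n>n(p_n+q_n+2h_n)$ and $m_n>n\,h_{n+1}$ for all $n$. A measure-preserving $S$ is conservative if for every set $A$ of positive measure there is $n\ge1$ with $\mu(S^{-n}A\cap A)>0$. *)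

theory Defs
  imports "HOL-Analysis.Analysis"
begin

text \<open>Rank-one cutting-and-stacking construction with four subcolumns.
  The data are the spacer sequences a, b, c, d (positive integers).
  Column G_n has height rk_H n; each level of G_n is an interval of width rk_w n = 4^(-n).
  Spacers added at stage n are fresh intervals of width rk_w (n+1) laid
  consecutively to the right of everything used so far (starting at rk_S n).\<close>

fun rk_H :: "(nat \<Rightarrow> nat) \<Rightarrow> (nat \<Rightarrow> nat) \<Rightarrow> (nat \<Rightarrow> nat) \<Rightarrow> (nat \<Rightarrow> nat) \<Rightarrow> nat \<Rightarrow> nat" where
  "rk_H a b c d 0 = 1"
| "rk_H a b c d (Suc n) = 4 * rk_H a b c d n + a n + b n + c n + d n"

definition rk_w :: "nat \<Rightarrow> real" where
  "rk_w n = (1/4) ^ n"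

text \<open>Right end of the part of the real line used by column G_n.\<close>
fun rk_S :: "(nat \<Rightarrow> nat) \<Rightarrow> (nat \<Rightarrow> nat) \<Rightarrow> (nat \<Rightarrow> nat) \<Rightarrow> (nat \<Rightarrow> nat) \<Rightarrow> nat \<Rightarrow> real" where
  "rk_S a b c d 0 = 1"
| "rk_S a b c d (Suc n) = rk_S a b c d n + real (a n + b n + c n + d n) * rk_w (Suc n)"

text \<open>Left endpoint of level j (0 = bottom) of column G_n.\<close>
fun rk_lev :: "(nat \<Rightarrow> nat) \<Rightarrow> (nat \<Rightarrow> nat) \<Rightarrow> (nat \<Rightarrow> nat) \<Rightarrow> (nat \<Rightarrow> nat) \<Rightarrow> nat \<Rightarrow> nat \<Rightarrow> real" where
  "rk_lev a b c d 0 j = 0"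
| "rk_lev a b c d (Suc n) j =
    (let Hn = rk_H a b c d n; A = a n; B = b n; C = c n;
         w = rk_w (Suc n); S = rk_S a b c d n in
     if j < Hn then rk_lev a b c d n j
     else if j < Hn + A then S + real (j - Hn) * w
     else if j < 2*Hn + A then rk_lev a b c d n (j - (Hn + A)) + w
     else if j < 2*Hn + A + B then S + real (A + (j - (2*Hn + A))) * w
     else if j < 3*Hn + A + B then rk_lev a b c d n (j - (2*Hn + A + B)) + 2*w
     else if j < 3*Hn + A + B + C then S + real (A + B + (j - (3*Hn + A + B))) * w
     else if j < 4*Hn + A + B + C then rk_lev a b c d n (j - (3*Hn + A + B + C)) + 3*w
     else S + real (A + B + C + (j - (4*Hn + A + B + C))) * w)"

definition rk_level :: "(nat \<Rightarrow> nat) \<Rightarrow> (nat \<Rightarrow> nat) \<Rightarrow> (nat \<Rightarrow> nat) \<Rightarrow> (nat \<Rightarrow> nat) \<Rightarrow> nat \<Rightarrow> nat \<Rightarrow> real set" where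
  "rk_level a b c d n j = {rk_lev a b c d n j ..< rk_lev a b c d n j + rk_w n}"

definition rk_X :: "(nat \<Rightarrow> nat) \<Rightarrow> (nat \<Rightarrow> nat) \<Rightarrow> (nat \<Rightarrow> nat) \<Rightarrow> (nat \<Rightarrow> nat) \<Rightarrow> real set" where
  "rk_X a b c d = (\<Union>n. \<Union>j\<in>{..<rk_H a b c d n}. rk_level a b c d n j)"

text \<open>T maps level j of G_n onto level j+1 by translation (j+1 < H_n); this is
  consistent in n. Where T is undefined (a null set) we let it be the identity.\<close>
definition rk_T :: "(nat \<Rightarrow> nat) \<Rightarrow> (nat \<Rightarrow> nat) \<Rightarrow> (nat \<Rightarrow> nat) \<Rightarrow> (nat \<Rightarrow> nat) \<Rightarrow> real \<Rightarrow> real" where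
  "rk_T a b c d x =
     (if \<exists>n j. Suc j < rk_H a b c d n \<and> x \<in> rk_level a b c d n j
      then (let (n, j) = (SOME (n, j). Suc j < rk_H a b c d n \<and> x \<in> rk_level a b c d n j)
            in x - rk_lev a b c d n j + rk_lev a b c d n (Suc j))
      else x)"

definition rk_Tinv :: "(nat \<Rightarrow> nat) \<Rightarrow> (nat \<Rightarrow> nat) \<Rightarrow> (nat \<Rightarrow> nat) \<Rightarrow> (nat \<Rightarrow> nat) \<Rightarrow> real \<Rightarrow> real" where
  "rk_Tinv a b c d x =
     (if \<exists>n j. Suc j < rk_H a b c d n \<and> x \<in> rk_level a b c d n (Suc j)
      then (let (n, j) = (SOME (n, j). Suc j < rk_H a b c d n \<and> x \<in> rk_level a b c d n (Suc j))
            in x - rk_lev a b c d n (Suc j) + rk_lev a b c d n j)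
      else x)"

definition rk_M :: "(nat \<Rightarrow> nat) \<Rightarrow> (nat \<Rightarrow> nat) \<Rightarrow> (nat \<Rightarrow> nat) \<Rightarrow> (nat \<Rightarrow> nat) \<Rightarrow> real measure" where
  "rk_M a b c d = restrict_space lebesgue (rk_X a b c d)"

definition rk_p where "rk_p a b c d n = rk_H a b c d n + a n"
definition rk_l where "rk_l a b c d n = rk_H a b c d n + b n"
definition rk_q where "rk_q a b c d n = rk_H a b c d n + c n"
definition rk_m where "rk_m a b c d n = rk_H a b c d n + d n"

fun rk_h :: "(nat \<Rightarrow> nat) \<Rightarrow> (nat \<Rightarrow> nat) \<Rightarrow> (nat \<Rightarrow> nat) \<Rightarrow> (nat \<Rightarrow> nat) \<Rightarrow> nat \<Rightarrow> nat" where
  "rk_h a b c d 0 = 1"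
| "rk_h a b c d (Suc n) = rk_p a b c d n + rk_l a b c d n + rk_q a b c d n + rk_H a b c d n"

definition in_W :: "(nat \<Rightarrow> nat) \<Rightarrow> (nat \<Rightarrow> nat) \<Rightarrow> (nat \<Rightarrow> nat) \<Rightarrow> (nat \<Rightarrow> nat) \<Rightarrow> bool" where
  "in_W a b c d \<longleftrightarrow>
     filterlim (\<lambda>n. real (rk_p a b c d n) / real (rk_h a b c d n)) at_top sequentially
   \<and> (\<forall>n. rk_l a b c d n > n * (rk_p a b c d n + rk_q a b c d n + 2 * rk_h a b c d n))
   \<and> (\<forall>n. rk_m a b c d n > n * rk_h a b c d (Suc n))"

definition conservative :: "'a measure \<Rightarrow> ('a \<Rightarrow> 'a) \<Rightarrow> bool" where
  "conservative M S \<longleftrightarrow>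
     (\<forall>A\<in>sets M. emeasure M A > 0 \<longrightarrow> (\<exists>n\<ge>1. emeasure M ((S ^^ n) -` A \<inter> A) > 0))"

end

theory Submission
  imports Defs
begin

fun rk_pi :: "(nat \<Rightarrow> nat) \<Rightarrow> (nat \<Rightarrow> nat) \<Rightarrow> (nat \<Rightarrow> nat) \<Rightarrow> (nat \<Rightarrow> nat) \<Rightarrow> nat \<Rightarrow> nat \<Rightarrow> nat" where
  "rk_pi a b c d 0 j = 0"
| "rk_pi a b c d (Suc n) j =
    (let Hn = rk_H a b c d n; A = a n; B = b n; C = c n in
     if j < Hn then 4 * rk_pi a b c d n j
     else if j < Hn + A then 4*Hn + (j - Hn)
     else if j < 2*Hn + A then 4 * rk_pi a b c d n (j - (Hn + A)) + 1
     else if j < 2*Hn + A + B then 4*Hn + A + (j - (2*Hn + A))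
     else if j < 3*Hn + A + B then 4 * rk_pi a b c d n (j - (2*Hn + A + B)) + 2
     else if j < 3*Hn + A + B + C then 4*Hn + A + B + (j - (3*Hn + A + B))
     else if j < 4*Hn + A + B + C then 4 * rk_pi a b c d n (j - (3*Hn + A + B + C)) + 3
     else 4*Hn + A + B + C + (j - (4*Hn + A + B + C)))"

locale rk =
  fixes a b c d :: "nat \<Rightarrow> nat"
  assumes ap: "\<And>n. 0 < a n" and bp: "\<And>n. 0 < b n" and cp: "\<And>n. 0 < c n" and dp: "\<And>n. 0 < d n"
begin

abbreviation "H \<equiv> rk_H a b c d"
abbreviation "lev \<equiv> rk_lev a b c d"
abbreviation "S \<equiv> rk_S a b c d"
abbreviation "level \<equiv> rk_level a b c d"
abbreviation "X \<equiv> rk_X a b c d"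
abbreviation "T \<equiv> rk_T a b c d"
abbreviation "Ti \<equiv> rk_Tinv a b c d"
abbreviation "M \<equiv> rk_M a b c d"
abbreviation "pp \<equiv> rk_pi a b c d"
abbreviation "w \<equiv> rk_w"

lemma w_Suc: "w (Suc n) = w n / 4" by (simp add: rk_w_def)
lemma w_pos: "0 < w n" by (simp add: rk_w_def)

lemma H_pos: "0 < H n" by (induction n) auto

lemma S_eq: "S n = real (H n) * w n"
  by (induction n) (auto simp: w_Suc field_simps rk_w_def)

lemma lev_pi: "lev n j = real (pp n j) * w n"
proof (induction n arbitrary: j)
  case 0 then show ?case by simp
next
  case (Suc n)
  show ?case using Suc
    by (auto simp: Let_def S_eq w_Suc field_simps of_nat_diff)
qed

lemma pi_lt: "j < H n \<Longrightarrow> pp n j < H n"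
proof (induction n arbitrary: j)
  case 0 then show ?case by simp
next
  case (Suc n)
  have *: "\<And>k. k < H n \<Longrightarrow> pp n k < H n" by (rule Suc.IH)
  let ?Hn = "H n" and ?A = "a n" and ?B = "b n" and ?C = "c n"
  consider "j < ?Hn" | "?Hn \<le> j" "j < ?Hn + ?A" | "?Hn + ?A \<le> j" "j < 2*?Hn + ?A"
    | "2*?Hn + ?A \<le> j" "j < 2*?Hn + ?A + ?B" | "2*?Hn + ?A + ?B \<le> j" "j < 3*?Hn + ?A + ?B"
    | "3*?Hn + ?A + ?B \<le> j" "j < 3*?Hn + ?A + ?B + ?C" | "3*?Hn + ?A + ?B + ?C \<le> j" "j < 4*?Hn + ?A + ?B + ?C"
    | "4*?Hn + ?A + ?B + ?C \<le> j" by linarith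
  then show ?case
  proof cases
    case 1 then show ?thesis using *[of j] by (simp add: Let_def)
  next
    case 2 then show ?thesis using Suc.prems by (simp add: Let_def)
  next
    case 3
    then have "j - (?Hn + ?A) < ?Hn" by linarith
    then have "pp n (j - (?Hn + ?A)) < ?Hn" by (rule *)
    then show ?thesis using 3 by (simp add: Let_def)
  next
    case 4 then show ?thesis using Suc.prems by (simp add: Let_def)
  next
    case 5
    then have "j - (2*?Hn + ?A + ?B) < ?Hn" by linarith
    then have "pp n (j - (2*?Hn + ?A + ?B)) < ?Hn" by (rule *)
    then show ?thesis using 5 by (simp add: Let_def)
  next
    case 6 then show ?thesis using Suc.prems by (simp add: Let_def)
  next
    case 7
    then have "j - (3*?Hn + ?A + ?B + ?C) < ?Hn" by linarith
    then have "pp n (j - (3*?Hn + ?A + ?B + ?C)) < ?Hn" by (rule *)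
    then show ?thesis using 7 by (simp add: Let_def)
  next
    case 8 then show ?thesis using Suc.prems by (simp add: Let_def)
  qed
qed

lemma pi0: "pp n 0 = 0"
  by (induction n) (auto simp: Let_def H_pos)

lemma pi_top: "pp (Suc n) (H (Suc n) - 1) \<ge> 4 * H n"
proof -
  have "\<not> H (Suc n) - 1 < 4 * H n + a n + b n + c n" using dp[of n] by simp
  then show ?thesis by (simp only: rk_pi.simps Let_def if_False) (simp add: not_less)
qed

lemma pi_surj: "i < H n \<Longrightarrow> \<exists>j<H n. pp n j = i"
proof (induction n arbitrary: i)
  case 0 then show ?case by simp
next
  case (Suc n)
  let ?Hn = "H n" and ?A = "a n" and ?B = "b n" and ?C = "c n"
  show ?case
  proof (cases "i < 4 * H n")
    case True
    then have "i div 4 < H n" by simp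
    then obtain j where j: "j < H n" "pp n j = i div 4" using Suc.IH by blast
    have i4: "i = 4 * (i div 4) + i mod 4" by simp
    have "i mod 4 < 4" by simp
    then consider "i mod 4 = 0" | "i mod 4 = 1" | "i mod 4 = 2" | "i mod 4 = 3" by linarith
    then show ?thesis
    proof cases
      case 1
      then show ?thesis using j i4 by (intro exI[of _ j]) (auto simp: Let_def)
    next
      case 2
      then show ?thesis using j i4 by (intro exI[of _ "j + ?Hn + ?A"]) (auto simp: Let_def)
    next
      case 3
      then show ?thesis using j i4 by (intro exI[of _ "j + 2*?Hn + ?A + ?B"]) (auto simp: Let_def)
    next
      case 4
      then show ?thesis using j i4 by (intro exI[of _ "j + 3*?Hn + ?A + ?B + ?C"]) (auto simp: Let_def)
    qed
  next
    case False
    consider "i < 4 * ?Hn + ?A" | "4*?Hn + ?A \<le> i" "i < 4 * ?Hn + ?A + ?B"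
      | "4*?Hn + ?A + ?B \<le> i" "i < 4 * ?Hn + ?A + ?B + ?C"
      | "4*?Hn + ?A + ?B + ?C \<le> i" by linarith
    then show ?thesis
    proof cases
      case 1
      then show ?thesis using False Suc.prems
        by (intro exI[of _ "i - 4 * ?Hn + ?Hn"]) (auto simp: Let_def)
    next
      case 2
      then show ?thesis using False Suc.prems
        by (intro exI[of _ "i - (4 * ?Hn + ?A) + 2 * ?Hn + ?A"]) (auto simp: Let_def)
    next
      case 3
      then show ?thesis using False Suc.prems
        by (intro exI[of _ "i - (4 * ?Hn + ?A + ?B) + 3 * ?Hn + ?A + ?B"]) (auto simp: Let_def)
    next
      case 4
      then show ?thesis using False Suc.prems
        by (intro exI[of _ "i - (4 * ?Hn + ?A + ?B + ?C) + 4 * ?Hn + ?A + ?B + ?C"]) (auto simp: Let_def)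
    qed
  qed
qed

lemma pi_bij: "bij_betw (pp n) {..<H n} {..<H n}"
proof -
  have sub: "{..<H n} \<subseteq> pp n ` {..<H n}" using pi_surj by fastforce
  have inj: "inj_on (pp n) {..<H n}"
    by (rule finite_surj_inj) (use sub in auto)
  have "pp n ` {..<H n} = {..<H n}" using sub pi_lt by auto
  with inj show ?thesis by (simp add: bij_betw_def)
qed

lemma pi_inj: "j < H n \<Longrightarrow> j' < H n \<Longrightarrow> pp n j = pp n j' \<Longrightarrow> j = j'"
  using pi_bij[of n] by (auto simp: bij_betw_def inj_on_def)

end

context rk begin

definition iv :: "nat \<Rightarrow> nat \<Rightarrow> real set" where
  "iv t i = {real i * w t ..< real (Suc i) * w t}"

lemma level_iv: "level n j = iv n (pp n j)"
  by (simp add: rk_level_def iv_def lev_pi algebra_simps)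

lemma iv_unique: "x \<in> iv t i \<Longrightarrow> x \<in> iv t i' \<Longrightarrow> i = i'"
proof -
  assume A: "x \<in> iv t i" "x \<in> iv t i'"
  have wp: "0 < w t" by (rule w_pos)
  from A have "x / w t < real (Suc i)" "real i' \<le> x / w t" "x / w t < real (Suc i')" "real i \<le> x / w t"
    using wp by (auto simp: iv_def pos_le_divide_eq pos_divide_less_eq)
  show "i = i'"
  proof (rule ccontr)
    assume "i \<noteq> i'"
    then have "i < i' \<or> i' < i" by arith
    then show False
    proof
      assume "i < i'" then have "real (Suc i) \<le> real i'" by simp
      with \<open>x / w t < real (Suc i)\<close> \<open>real i' \<le> x / w t\<close> show False by simp
    next
      assume "i' < i" then have "real (Suc i') \<le> real i" by simp
      with \<open>x / w t < real (Suc i')\<close> \<open>real i \<le> x / w t\<close> show False by simp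
    qed
  qed
qed

lemma iv_floor: "0 \<le> x \<Longrightarrow> x \<in> iv t (nat \<lfloor>x / w t\<rfloor>)"
proof -
  assume x: "0 \<le> x"
  have wp: "0 < w t" by (rule w_pos)
  have f0: "0 \<le> \<lfloor>x / w t\<rfloor>" using x wp by simp
  have "real_of_int \<lfloor>x / w t\<rfloor> \<le> x / w t" by (rule of_int_floor_le)
  moreover have "x / w t < real_of_int \<lfloor>x / w t\<rfloor> + 1" by (rule real_of_int_floor_add_one_gt)
  ultimately have "real_of_int \<lfloor>x / w t\<rfloor> * w t \<le> x / w t * w t" "x / w t * w t < (real_of_int \<lfloor>x / w t\<rfloor> + 1) * w t"
    using wp by (auto intro!: mult_right_mono mult_strict_right_mono simp del: times_divide_eq_left)
  then have "real_of_int \<lfloor>x / w t\<rfloor> * w t \<le> x" "x < (real_of_int \<lfloor>x / w t\<rfloor> + 1) * w t"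
    using wp by auto
  then show ?thesis using f0 by (auto simp: iv_def add.commute)
qed

lemma iv_bound: "x \<in> iv t i \<Longrightarrow> real i * w t \<le> x \<and> x < real (Suc i) * w t"
  by (simp add: iv_def)

lemma iv_lt: "x \<in> iv t i \<Longrightarrow> 0 \<le> x \<Longrightarrow> x < real N * w t \<Longrightarrow> i < N"
proof -
  assume A: "x \<in> iv t i" "0 \<le> x" "x < real N * w t"
  then have "real i * w t < real N * w t" using iv_bound[OF A(1)] by linarith
  then show "i < N" using w_pos[of t] by (simp add: mult_less_cancel_right)
qed

lemma iv_ge: "x \<in> iv t i \<Longrightarrow> real N * w t \<le> x \<Longrightarrow> N \<le> i"
proof -
  assume A: "x \<in> iv t i" "real N * w t \<le> x"
  then have "real N * w t < real (Suc i) * w t" using iv_bound[OF A(1)] by linarith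
  then have "N < Suc i" using w_pos[of t] by (simp add: mult_less_cancel_right)
  then show ?thesis by simp
qed

lemma iv_nonneg: "x \<in> iv t i \<Longrightarrow> 0 \<le> x"
  using iv_bound[of x t i] w_pos[of t] by (meson mult_nonneg_nonneg of_nat_0_le_iff less_imp_le order_trans)

lemma S_mono: "n \<le> n' \<Longrightarrow> S n \<le> S n'"
proof (induction n' rule: dec_induct)
  case base then show ?case by simp
next
  case (step k)
  have "0 \<le> real (a k + b k + c k + d k) * w (Suc k)" using w_pos[of "Suc k"] by simp
  then show ?case using step by simp
qed

lemma w_mono: "n \<le> n' \<Longrightarrow> w n' \<le> w n"
  by (simp add: rk_w_def power_decreasing)

lemma level_sub: "j < H n \<Longrightarrow> level n j \<subseteq> {0..<S n}"
proof
  fix x assume j: "j < H n" and x: "x \<in> level n j"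
  have "pp n j < H n" using pi_lt[OF j] .
  then have "real (Suc (pp n j)) * w n \<le> real (H n) * w n"
    using w_pos[of n] by (intro mult_right_mono) auto
  then show "x \<in> {0..<S n}" using x iv_bound[of x n "pp n j"] iv_nonneg[of x n "pp n j"]
    by (auto simp: level_iv S_eq)
qed

lemma in_level: "0 \<le> x \<Longrightarrow> x < S n \<Longrightarrow> \<exists>j<H n. x \<in> level n j"
proof -
  assume x: "0 \<le> x" "x < S n"
  let ?i = "nat \<lfloor>x / w n\<rfloor>"
  have xi: "x \<in> iv n ?i" by (rule iv_floor[OF x(1)])
  have "?i < H n" using iv_lt[OF xi x(1)] x(2) by (simp add: S_eq)
  then obtain j where "j < H n" "pp n j = ?i" using pi_surj by blast
  then show ?thesis using xi by (auto simp: level_iv)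
qed

lemma X_eq: "X = {x. 0 \<le> x \<and> (\<exists>n. x < S n)}"
proof
  show "X \<subseteq> {x. 0 \<le> x \<and> (\<exists>n. x < S n)}"
    using level_sub by (fastforce simp: rk_X_def)
  show "{x. 0 \<le> x \<and> (\<exists>n. x < S n)} \<subseteq> X"
    using in_level by (fastforce simp: rk_X_def)
qed

lemma level_same: "x \<in> level n j \<Longrightarrow> x \<in> level n j' \<Longrightarrow> j < H n \<Longrightarrow> j' < H n \<Longrightarrow> j = j'"
  using iv_unique pi_inj by (metis level_iv)

definition off :: "nat \<Rightarrow> nat \<Rightarrow> nat" where
  "off n r = (if r = 0 then 0 else if r = 1 then H n + a n else if r = 2 then 2 * H n + a n + b n
              else 3 * H n + a n + b n + c n)"

lemma lev_off: "r < 4 \<Longrightarrow> j < H n \<Longrightarrow> lev (Suc n) (off n r + j) = lev n j + real r * w (Suc n)"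
proof -
  assume r: "r < 4" and j: "j < H n"
  then consider "r = 0" | "r = 1" | "r = 2" | "r = 3" by linarith
  then show ?thesis using j by cases (auto simp: off_def Let_def)
qed

lemma off_lt: "r < 4 \<Longrightarrow> j < H n \<Longrightarrow> off n r + j < 4 * H n + a n + b n + c n"
  by (auto simp: off_def)

lemma decomp: "j < H (Suc n) \<Longrightarrow> (\<exists>r<4. \<exists>j''<H n. j = off n r + j'') \<or> 4 * H n \<le> pp (Suc n) j"
proof -
  assume j: "j < H (Suc n)"
  let ?Hn = "H n" and ?A = "a n" and ?B = "b n" and ?C = "c n"
  consider "j < ?Hn" | "?Hn \<le> j" "j < ?Hn + ?A" | "?Hn + ?A \<le> j" "j < 2*?Hn + ?A"
    | "2*?Hn + ?A \<le> j" "j < 2*?Hn + ?A + ?B" | "2*?Hn + ?A + ?B \<le> j" "j < 3*?Hn + ?A + ?B"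
    | "3*?Hn + ?A + ?B \<le> j" "j < 3*?Hn + ?A + ?B + ?C" | "3*?Hn + ?A + ?B + ?C \<le> j" "j < 4*?Hn + ?A + ?B + ?C"
    | "4*?Hn + ?A + ?B + ?C \<le> j" by linarith
  then show ?thesis
  proof cases
    case 1 then show ?thesis by (intro disjI1 exI[of _ 0] exI[of _ j]) (auto simp: off_def)
  next
    case 2 then show ?thesis by (intro disjI2) (simp add: Let_def)
  next
    case 3 then show ?thesis
      apply (intro disjI1)
      apply (rule exI[of _ 1])
      apply (simp add: off_def)
      apply (rule exI[of _ "j - (?Hn + ?A)"])
      by auto
  next
    case 4 then show ?thesis by (intro disjI2) (simp add: Let_def)
  next
    case 5 then show ?thesis
      apply (intro disjI1)
      apply (rule exI[of _ 2])
      apply (simp add: off_def)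
      apply (rule exI[of _ "j - (2*?Hn + ?A + ?B)"])
      by auto
  next
    case 6 then show ?thesis by (intro disjI2) (simp add: Let_def)
  next
    case 7 then show ?thesis
      apply (intro disjI1)
      apply (rule exI[of _ 3])
      apply (simp add: off_def)
      apply (rule exI[of _ "j - (3*?Hn + ?A + ?B + ?C)"])
      by auto
  next
    case 8 then show ?thesis by (intro disjI2) (simp add: Let_def)
  qed
qed

lemma spacer_ge: "x \<in> level (Suc n) j \<Longrightarrow> 4 * H n \<le> pp (Suc n) j \<Longrightarrow> S n \<le> x"
proof -
  assume x: "x \<in> level (Suc n) j" and p: "4 * H n \<le> pp (Suc n) j"
  have "S n = real (4 * H n) * w (Suc n)" by (simp add: S_eq w_Suc)
  also have "\<dots> \<le> real (pp (Suc n) j) * w (Suc n)" using p w_pos[of "Suc n"] by (intro mult_right_mono) auto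
  also have "\<dots> \<le> x" using x iv_bound by (simp add: level_iv)
  finally show ?thesis .
qed

lemma level_lt_S: "x \<in> level n j \<Longrightarrow> j < H n \<Longrightarrow> x < S n"
  using level_sub[of j n] by auto

lemma level_Suc_sub: "r < 4 \<Longrightarrow> j < H n \<Longrightarrow> level (Suc n) (off n r + j) \<subseteq> level n j"
proof -
  assume r: "r < 4" and j: "j < H n"
  have "real r \<le> 3" using r by simp
  then have "real r * w n \<le> 3 * w n" using w_pos[of n] by (intro mult_right_mono) auto
  then have "real r * w (Suc n) + w (Suc n) \<le> w n" by (simp add: w_Suc field_simps)
  moreover have "0 \<le> real r * w (Suc n)" using w_pos[of "Suc n"] by simp
  ultimately show ?thesis unfolding rk_level_def lev_off[OF r j] by auto
qed

end

context rk begin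

lemma lev_mem_shift: "x \<in> level n j \<Longrightarrow> x - lev n j + lev n j' \<in> level n j'"
  by (auto simp: rk_level_def)

lemma pp_Suc_pos: "Suc j < H n \<Longrightarrow> 0 < pp n (Suc j)"
  using pi_inj[of "Suc j" n 0] pi0[of n] by (metis H_pos gr0I nat.distinct(1))

lemma level_Suc_ge: "x \<in> level n (Suc j) \<Longrightarrow> Suc j < H n \<Longrightarrow> w n \<le> x"
proof -
  assume x: "x \<in> level n (Suc j)" and j: "Suc j < H n"
  have "1 \<le> real (pp n (Suc j))" using pp_Suc_pos[OF j] by simp
  then have "w n \<le> real (pp n (Suc j)) * w n" using w_pos[of n] by simp
  then show ?thesis using x iv_bound by (force simp: level_iv)
qed

lemma level0: "x \<in> level n 0 \<Longrightarrow> x < w n"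
  using iv_bound[of x n 0] by (simp add: level_iv pi0)

lemma Tcons:
  assumes x: "x \<in> level n j" and j: "Suc j < H n" and nn: "n \<le> n'"
  shows "x \<in> level n' j' \<Longrightarrow> Suc j' < H n' \<Longrightarrow> lev n' (Suc j') - lev n' j' = lev n (Suc j) - lev n j"
  using nn
proof (induction n' arbitrary: j' rule: dec_induct)
  case base
  then have "j' = j" using level_same[of x n j' j] x j by simp
  then show ?case by simp
next
  case (step k)
  have xS: "x < S n" using level_lt_S[OF x] j by simp
  have Sk: "S n \<le> S k" using S_mono step.hyps(1) by simp
  have "j' < H (Suc k)" using step.prems by simp
  from decomp[OF this] show ?case
  proof
    assume "\<exists>r<4. \<exists>j''<H k. j' = off k r + j''"
    then obtain r j'' where r: "r < 4" and j'': "j'' < H k" and jj: "j' = off k r + j''" by blast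
    have xk: "x \<in> level k j''" using level_Suc_sub[OF r j''] step.prems(1) jj by auto
    show ?thesis
    proof (cases "Suc j'' < H k")
      case True
      have "lev (Suc k) (Suc j') = lev k (Suc j'') + real r * w (Suc k)"
        using lev_off[OF r True] jj by simp
      moreover have "lev (Suc k) j' = lev k j'' + real r * w (Suc k)"
        using lev_off[OF r j''] jj by simp
      ultimately show ?thesis using step.IH[OF xk True] by simp
    next
      case False
      then have top: "j'' = H k - 1" using j'' by simp
      show ?thesis
      proof (cases "k = n")
        case True
        then have "j'' = j" using level_same[of x n j'' j] xk x j j'' by simp
        then show ?thesis using top j True by simp
      next
        case False
        then obtain k0 where k0: "k = Suc k0" "n \<le> k0" using step.hyps(1)
          by (metis le_SucE not0_implies_Suc le_antisym zero_le)
        have "S k0 \<le> x" using spacer_ge[of x k0 "H (Suc k0) - 1"] pi_top[of k0] xk top k0 by simp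
        moreover have "S n \<le> S k0" using S_mono k0 by simp
        ultimately show ?thesis using xS by simp
      qed
    qed
  next
    assume "4 * H k \<le> pp (Suc k) j'"
    then have "S k \<le> x" using spacer_ge step.prems(1) by blast
    then show ?thesis using xS Sk by simp
  qed
qed

lemma Ticons:
  assumes x: "x \<in> level n (Suc j)" and j: "Suc j < H n" and nn: "n \<le> n'"
  shows "x \<in> level n' (Suc j') \<Longrightarrow> Suc j' < H n' \<Longrightarrow> lev n' (Suc j') - lev n' j' = lev n (Suc j) - lev n j"
  using nn
proof (induction n' arbitrary: j' rule: dec_induct)
  case base
  then have "Suc j' = Suc j" using level_same[of x n "Suc j'" "Suc j"] x j by simp
  then show ?case by simp
next
  case (step k)
  have xS: "x < S n" using level_lt_S[OF x] j by simp
  have Sk: "S n \<le> S k" using S_mono step.hyps(1) by simp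
  have "Suc j' < H (Suc k)" using step.prems by simp
  from decomp[OF this] show ?case
  proof
    assume "\<exists>r<4. \<exists>j''<H k. Suc j' = off k r + j''"
    then obtain r j'' where r: "r < 4" and j'': "j'' < H k" and jj: "Suc j' = off k r + j''" by blast
    have xk: "x \<in> level k j''" using level_Suc_sub[OF r j''] step.prems(1) jj by (metis subsetD)
    show ?thesis
    proof (cases j'')
      case 0
      have "x < w k" using level0 xk 0 by simp
      moreover have "w k \<le> w n" using w_mono step.hyps(1) by simp
      moreover have "w n \<le> x" using level_Suc_ge[OF x j] .
      ultimately show ?thesis by simp
    next
      case (Suc m)
      have m: "Suc m < H k" using j'' Suc by simp
      have jm: "j' = off k r + m" using jj Suc by simp
      have "lev (Suc k) (Suc j') = lev k (Suc m) + real r * w (Suc k)"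
        using lev_off[OF r j''] jj Suc by simp
      moreover have "lev (Suc k) j' = lev k m + real r * w (Suc k)"
        using lev_off[OF r, of m k] jm m by simp
      ultimately show ?thesis using step.IH[of m] xk Suc m by simp
    qed
  next
    assume "4 * H k \<le> pp (Suc k) (Suc j')"
    then have "S k \<le> x" using spacer_ge step.prems(1) by blast
    then show ?thesis using xS Sk by simp
  qed
qed

lemma T_eq:
  assumes x: "x \<in> level n j" and j: "Suc j < H n"
  shows "T x = x - lev n j + lev n (Suc j)"
proof -
  let ?P = "\<lambda>(n, j). Suc j < H n \<and> x \<in> level n j"
  have ex: "\<exists>n j. Suc j < H n \<and> x \<in> level n j" using x j by blast
  have "\<exists>p. ?P p" using x j by auto
  then have P: "?P (SOME p. ?P p)" by (rule someI_ex)
  obtain n' j' where nj: "(SOME p. ?P p) = (n', j')" by (cases "SOME p. ?P p") auto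
  with P have P': "Suc j' < H n'" "x \<in> level n' j'" by auto
  have eq: "lev n' (Suc j') - lev n' j' = lev n (Suc j) - lev n j"
  proof (cases "n \<le> n'")
    case True then show ?thesis using Tcons[OF x j True P'(2) P'(1)] by simp
  next
    case False then show ?thesis using Tcons[OF P'(2) P'(1) _ x j] by simp
  qed
  have "T x = x - lev n' j' + lev n' (Suc j')"
    unfolding rk_T_def using ex nj by simp
  then show ?thesis using eq by simp
qed

lemma Ti_eq:
  assumes x: "x \<in> level n (Suc j)" and j: "Suc j < H n"
  shows "Ti x = x - lev n (Suc j) + lev n j"
proof -
  let ?P = "\<lambda>(n, j). Suc j < H n \<and> x \<in> level n (Suc j)"
  have ex: "\<exists>n j. Suc j < H n \<and> x \<in> level n (Suc j)" using x j by blast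
  have "\<exists>p. ?P p" using x j by auto
  then have P: "?P (SOME p. ?P p)" by (rule someI_ex)
  obtain n' j' where nj: "(SOME p. ?P p) = (n', j')" by (cases "SOME p. ?P p") auto
  with P have P': "Suc j' < H n'" "x \<in> level n' (Suc j')" by auto
  have eq: "lev n' (Suc j') - lev n' j' = lev n (Suc j) - lev n j"
  proof (cases "n \<le> n'")
    case True then show ?thesis using Ticons[OF x j True P'(2) P'(1)] by simp
  next
    case False then show ?thesis using Ticons[OF P'(2) P'(1) _ x j] by simp
  qed
  have "Ti x = x - lev n' (Suc j') + lev n' j'"
    unfolding rk_Tinv_def using ex nj by simp
  then show ?thesis using eq by simp
qed

lemma T_pow: "x \<in> level n j \<Longrightarrow> j + k < H n \<Longrightarrow> (T ^^ k) x = x - lev n j + lev n (j + k)"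
proof (induction k)
  case 0 then show ?case by simp
next
  case (Suc k)
  have y: "(T ^^ k) x \<in> level n (j + k)" using Suc lev_mem_shift[of x n j "j + k"] by simp
  have "(T ^^ Suc k) x = T ((T ^^ k) x)" by simp
  also have "\<dots> = (T ^^ k) x - lev n (j + k) + lev n (Suc (j + k))"
    using T_eq[OF y] Suc.prems by simp
  finally show ?case using Suc by simp
qed

lemma Ti_pow: "x \<in> level n j \<Longrightarrow> j < H n \<Longrightarrow> k \<le> j \<Longrightarrow> (Ti ^^ k) x = x - lev n j + lev n (j - k)"
proof (induction k)
  case 0 then show ?case by simp
next
  case (Suc k)
  have jk: "j - k = Suc (j - Suc k)" using Suc.prems by simp
  have y: "(Ti ^^ k) x \<in> level n (Suc (j - Suc k))" using Suc lev_mem_shift[of x n j "j - k"] jk by simp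
  have "(Ti ^^ Suc k) x = Ti ((Ti ^^ k) x)" by simp
  also have "\<dots> = (Ti ^^ k) x - lev n (Suc (j - Suc k)) + lev n (j - Suc k)"
    using Ti_eq[OF y] Suc.prems jk by simp
  finally show ?case using Suc jk by simp
qed

lemma T_cover: "x \<in> X \<Longrightarrow> \<exists>n j. Suc j < H n \<and> x \<in> level n j"
proof -
  assume "x \<in> X"
  then obtain n where x: "0 \<le> x" "x < S n" by (auto simp: X_eq)
  have "x < S (Suc n)" using x S_mono[of n "Suc n"] by simp
  then obtain j where j: "j < H (Suc n)" "x \<in> level (Suc n) j" using in_level x by blast
  show ?thesis
  proof (cases "Suc j < H (Suc n)")
    case True then show ?thesis using j by blast
  next
    case False
    then have "j = H (Suc n) - 1" using j by simp
    then have "S n \<le> x" using spacer_ge[OF j(2)] pi_top[of n] by simp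
    then show ?thesis using x by simp
  qed
qed

lemma Ti_cover: "x \<in> X \<Longrightarrow> x \<noteq> 0 \<Longrightarrow> \<exists>n j. Suc j < H n \<and> x \<in> level n (Suc j)"
proof -
  assume xX: "x \<in> X" and x0: "x \<noteq> 0"
  then obtain n where x: "0 \<le> x" "x < S n" by (auto simp: X_eq)
  then have xp: "0 < x" using x0 by simp
  obtain n1 where n1: "(1/4::real) ^ n1 < x" using real_arch_pow_inv[OF xp, of "1/4"] by auto
  let ?n = "max n n1"
  have "x < S ?n" using x S_mono[of n ?n] by simp
  then obtain j where j: "j < H ?n" "x \<in> level ?n j" using in_level x by blast
  have "w ?n \<le> w n1" using w_mono by simp
  moreover have "w n1 < x" using n1 by (simp add: rk_w_def)
  ultimately have "w ?n < x" by linarith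
  then have "j \<noteq> 0" using level0[of x ?n] j by (metis less_le_not_le)
  then obtain j0 where "j = Suc j0" using not0_implies_Suc by blast
  then show ?thesis using j by blast
qed

lemma level_X: "j < H n \<Longrightarrow> level n j \<subseteq> X"
  by (auto simp: rk_X_def)

lemma T_X: "x \<in> X \<Longrightarrow> T x \<in> X"
proof -
  assume "x \<in> X"
  then obtain n j where nj: "Suc j < H n" "x \<in> level n j" using T_cover by blast
  then have "T x \<in> level n (Suc j)" using T_eq lev_mem_shift by simp
  then show ?thesis using level_X[OF nj(1)] by auto
qed

lemma Ti_zero: "Ti 0 = 0"
proof -
  have "\<not> (\<exists>n j. Suc j < H n \<and> (0::real) \<in> level n (Suc j))"
    using level_Suc_ge w_pos by (meson not_le)
  then show ?thesis unfolding rk_Tinv_def by (simp only: if_False)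
qed

lemma Ti_X: "x \<in> X \<Longrightarrow> Ti x \<in> X"
proof -
  assume xX: "x \<in> X"
  show ?thesis
  proof (cases "x = 0")
    case True then show ?thesis using xX Ti_zero by simp
  next
    case False
    then obtain n j where nj: "Suc j < H n" "x \<in> level n (Suc j)" using Ti_cover xX by blast
    then have "Ti x \<in> level n j" using Ti_eq lev_mem_shift by simp
    then show ?thesis using level_X[of j n] nj(1) by auto
  qed
qed

end

context rk begin

lemma Ico_leb[simp]: "{l..<u::real} \<in> sets lebesgue" by simp

lemma emeasure_leb_Ico: "l \<le> u \<Longrightarrow> emeasure lebesgue {l..<u::real} = ennreal (u - l)"
  by simp

lemma X_union: "X = (\<Union>n. {0..<S n})"
  by (auto simp: X_eq)

lemma X_sets: "X \<in> sets lebesgue"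
  unfolding X_union by (intro sets.countable_UN) auto

lemma space_M: "space M = X"
  by (simp add: rk_M_def X_sets)

lemma sets_M: "B \<in> sets M \<longleftrightarrow> B \<subseteq> X \<and> B \<in> sets lebesgue"
  unfolding rk_M_def by (rule sets_restrict_space_iff) (simp add: X_sets)

lemma emeasure_M: "B \<subseteq> X \<Longrightarrow> emeasure M B = emeasure lebesgue B"
  unfolding rk_M_def by (rule emeasure_restrict_space) (simp_all add: X_sets)

lemma measure_M: "B \<subseteq> X \<Longrightarrow> measure M B = measure lebesgue B"
  by (simp add: measure_def emeasure_M)

lemma S_pos: "0 < S n"
  using S_eq H_pos w_pos by simp

lemma Ico_X: "{0..<S n} \<subseteq> X"
  by (auto simp: X_union)

lemma sigma_finite_M: "sigma_finite_measure M"
proof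
  show "\<exists>A::real set set. countable A \<and> A \<subseteq> sets M \<and> \<Union>A = space M \<and> (\<forall>a\<in>A. emeasure M a \<noteq> \<infinity>)"
  proof (intro exI conjI)
    show "countable (range (\<lambda>n. {0..<S n}))" by simp
    show "range (\<lambda>n. {0..<S n}) \<subseteq> sets M" using Ico_X by (auto simp: sets_M)
    show "\<Union> (range (\<lambda>n. {0..<S n})) = space M" by (simp add: space_M X_union)
    show "\<forall>a\<in>range (\<lambda>n. {0..<S n}). emeasure M a \<noteq> \<infinity>"
      using Ico_X emeasure_M S_pos by (auto simp: less_imp_le)
  qed
qed

lemma translate_vimage: "(\<lambda>x::real. x + e) -` B = (\<lambda>x. - e + x) ` B"
  by (auto simp: image_iff) (metis add.commute diff_add_cancel minus_add_cancel uminus_add_conv_diff)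

lemma translate_sets: "B \<in> sets lebesgue \<Longrightarrow> (\<lambda>x::real. x + e) -` B \<in> sets lebesgue"
  unfolding translate_vimage by (rule lebesgue_sets_translation)

lemma translate_emeasure: "emeasure lebesgue ((\<lambda>x::real. e + x) ` B) = emeasure lebesgue B"
  using emeasure_lebesgue_affine[of 1 e B] by (simp add: add.commute)

lemma level_sets: "level n j \<in> sets lebesgue"
  by (simp add: rk_level_def)

lemma T_vimage: "B \<subseteq> X \<Longrightarrow> T -` B \<inter> X =
   (\<Union>n. \<Union>j\<in>{j. Suc j < H n}. level n j \<inter> (\<lambda>x. x + (lev n (Suc j) - lev n j)) -` B)"
proof (intro equalityI subsetI)
  fix x assume x: "x \<in> T -` B \<inter> X"
  then obtain n j where nj: "Suc j < H n" "x \<in> level n j" using T_cover by blast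
  have "T x = x + (lev n (Suc j) - lev n j)" using T_eq[OF nj(2) nj(1)] by simp
  then have "x + (lev n (Suc j) - lev n j) \<in> B" using x by auto
  then show "x \<in> (\<Union>n. \<Union>j\<in>{j. Suc j < H n}. level n j \<inter> (\<lambda>x. x + (lev n (Suc j) - lev n j)) -` B)"
    using nj by blast
next
  fix x assume "x \<in> (\<Union>n. \<Union>j\<in>{j. Suc j < H n}. level n j \<inter> (\<lambda>x. x + (lev n (Suc j) - lev n j)) -` B)"
  then obtain n j where nj: "Suc j < H n" "x \<in> level n j" "x + (lev n (Suc j) - lev n j) \<in> B" by blast
  have "T x = x + (lev n (Suc j) - lev n j)" using T_eq[OF nj(2) nj(1)] by simp
  then show "x \<in> T -` B \<inter> X" using nj level_X[of j n] by auto
qed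

lemma T_meas: "T \<in> measurable M M"
proof (rule measurableI)
  fix x assume "x \<in> space M" then show "T x \<in> space M" using T_X by (simp add: space_M)
next
  fix B assume B: "B \<in> sets M"
  then have BX: "B \<subseteq> X" and Bl: "B \<in> sets lebesgue" by (auto simp: sets_M)
  have "T -` B \<inter> X \<in> sets lebesgue"
    unfolding T_vimage[OF BX]
    by (intro sets.countable_UN sets.countable_UN''[OF countableI_type] sets.Int level_sets translate_sets Bl)
  then show "T -` B \<inter> space M \<in> sets M" by (auto simp: sets_M space_M)
qed

lemma Ti_vimage: "B \<subseteq> X \<Longrightarrow> Ti -` B \<inter> X =
   (\<Union>n. \<Union>j\<in>{j. Suc j < H n}. level n (Suc j) \<inter> (\<lambda>x. x + (lev n j - lev n (Suc j))) -` B) \<union> (B \<inter> {0})"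
proof (intro equalityI subsetI)
  fix x assume x: "x \<in> Ti -` B \<inter> X"
  show "x \<in> (\<Union>n. \<Union>j\<in>{j. Suc j < H n}. level n (Suc j) \<inter> (\<lambda>x. x + (lev n j - lev n (Suc j))) -` B) \<union> (B \<inter> {0})"
  proof (cases "x = 0")
    case True then show ?thesis using x Ti_zero by auto
  next
    case False
    then obtain n j where nj: "Suc j < H n" "x \<in> level n (Suc j)" using Ti_cover x by blast
    have "Ti x = x + (lev n j - lev n (Suc j))" using Ti_eq[OF nj(2) nj(1)] by simp
    then have "x + (lev n j - lev n (Suc j)) \<in> B" using x by auto
    then show ?thesis using nj by blast
  qed
next
  fix x assume x: "x \<in> (\<Union>n. \<Union>j\<in>{j. Suc j < H n}. level n (Suc j) \<inter> (\<lambda>x. x + (lev n j - lev n (Suc j))) -` B) \<union> (B \<inter> {0})"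
  assume BX: "B \<subseteq> X"
  show "x \<in> Ti -` B \<inter> X"
  proof (cases "x \<in> B \<inter> {0}")
    case True then show ?thesis using Ti_zero BX by auto
  next
    case False
    then obtain n j where nj: "Suc j < H n" "x \<in> level n (Suc j)" "x + (lev n j - lev n (Suc j)) \<in> B"
      using x by blast
    have "Ti x = x + (lev n j - lev n (Suc j))" using Ti_eq[OF nj(2) nj(1)] by simp
    then show ?thesis using nj level_X[of "Suc j" n] by auto
  qed
qed

lemma Ti_meas: "Ti \<in> measurable M M"
proof (rule measurableI)
  fix x assume "x \<in> space M" then show "Ti x \<in> space M" using Ti_X by (simp add: space_M)
next
  fix B assume B: "B \<in> sets M"
  then have BX: "B \<subseteq> X" and Bl: "B \<in> sets lebesgue" by (auto simp: sets_M)
  have "Ti -` B \<inter> X \<in> sets lebesgue"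
    unfolding Ti_vimage[OF BX]
    by (intro sets.Un sets.Int sets.countable_UN sets.countable_UN''[OF countableI_type] level_sets translate_sets Bl) auto
  then show "Ti -` B \<inter> space M \<in> sets M" by (auto simp: sets_M space_M)
qed

lemma funpow_meas: "f \<in> measurable N N \<Longrightarrow> (f ^^ k) \<in> measurable N N"
  by (induction k) (auto simp: measurable_ident intro: measurable_comp)

end

definition sw :: "real \<Rightarrow> real \<Rightarrow> real \<Rightarrow> real" where
  "sw u v x = (if (u \<le> x \<and> x < u + v) then x + v else (if (u + v \<le> x \<and> x < u + 2 * v) then x - v else x))"

context rk begin

lemma sw_vimage:
  assumes v: "0 < v" and I: "{u..<u+2 * v} \<subseteq> X" and BX: "B \<subseteq> X"
  shows "sw u v -` B \<inter> X = (B - {u..<u+2 * v}) \<union> ((\<lambda>x. - v + x) ` (B \<inter> {u+v..<u+2 * v}))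
            \<union> ((\<lambda>x. v + x) ` (B \<inter> {u..<u+v}))"
proof (intro equalityI subsetI)
  fix x assume x: "x \<in> sw u v -` B \<inter> X"
  consider "u \<le> x \<and> x < u + v" | "u + v \<le> x \<and> x < u + 2 * v" | "\<not> (u \<le> x \<and> x < u + 2 * v)" by linarith
  then show "x \<in> (B - {u..<u+2 * v}) \<union> ((\<lambda>x. - v + x) ` (B \<inter> {u+v..<u+2 * v})) \<union> ((\<lambda>x. v + x) ` (B \<inter> {u..<u+v}))"
  proof cases
    case 1
    then have "x + v \<in> B" using x by (simp add: sw_def)
    moreover have "x = - v + (x + v)" by simp
    ultimately show ?thesis using 1 by (intro UnI1 UnI2) (rule image_eqI, auto)
  next
    case 2
    then have "x - v \<in> B" using x by (simp add: sw_def)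
    moreover have "x = v + (x - v)" by simp
    ultimately show ?thesis using 2 by (intro UnI2) (rule image_eqI, auto)
  next
    case 3
    then have "sw u v x = x" by (auto simp: sw_def)
    then show ?thesis using x 3 by auto
  qed
next
  fix x assume x: "x \<in> (B - {u..<u+2 * v}) \<union> ((\<lambda>x. - v + x) ` (B \<inter> {u+v..<u+2 * v})) \<union> ((\<lambda>x. v + x) ` (B \<inter> {u..<u+v}))"
  then consider "x \<in> B - {u..<u+2 * v}" | "x \<in> (\<lambda>x. - v + x) ` (B \<inter> {u+v..<u+2 * v})" | "x \<in> (\<lambda>x. v + x) ` (B \<inter> {u..<u+v})"
    by blast
  then show "x \<in> sw u v -` B \<inter> X"
  proof cases
    case 1 then show ?thesis using BX by (auto simp: sw_def)
  next
    case 2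
    then obtain y where y: "y \<in> B" "u+v \<le> y" "y < u+2 * v" "x = - v + y" by auto
    then have "sw u v x = y" by (auto simp: sw_def)
    moreover have "x \<in> X" using y I v by auto
    ultimately show ?thesis using y by auto
  next
    case 3
    then obtain y where y: "y \<in> B" "u \<le> y" "y < u+v" "x = v + y" by auto
    then have "sw u v x = y" using v by (auto simp: sw_def)
    moreover have "x \<in> X" using y I v by auto
    ultimately show ?thesis using y by auto
  qed
qed

lemma sw_meas:
  assumes v: "0 < v" and I: "{u..<u+2 * v} \<subseteq> X"
  shows "sw u v \<in> measurable M M"
proof (rule measurableI)
  fix x assume x: "x \<in> space M"
  show "sw u v x \<in> space M" using x I v by (auto simp: sw_def space_M)
next
  fix B assume B: "B \<in> sets M"
  then have BX: "B \<subseteq> X" and Bl: "B \<in> sets lebesgue" by (auto simp: sets_M)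
  have "sw u v -` B \<inter> X \<in> sets lebesgue"
    unfolding sw_vimage[OF v I BX]
    by (intro sets.Un sets.Diff Bl lebesgue_sets_translation sets.Int) auto
  then show "sw u v -` B \<inter> space M \<in> sets M" by (auto simp: sets_M space_M)
qed

lemma sw_distr:
  assumes v: "0 < v" and I: "{u..<u+2 * v} \<subseteq> X"
  shows "distr M M (sw u v) = M"
proof (rule measure_eqI)
  show "sets (distr M M (sw u v)) = sets M" by simp
next
  fix B assume "B \<in> sets (distr M M (sw u v))"
  then have B: "B \<in> sets M" by simp
  then have BX: "B \<subseteq> X" and Bl: "B \<in> sets lebesgue" by (auto simp: sets_M)
  let ?I = "{u..<u+2 * v}" and ?I1 = "{u..<u+v}" and ?I2 = "{u+v..<u+2 * v}"
  let ?P2 = "(\<lambda>x. - v + x) ` (B \<inter> ?I2)" and ?P3 = "(\<lambda>x. v + x) ` (B \<inter> ?I1)"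
  have s1: "B - ?I \<in> sets lebesgue" using Bl by auto
  have s2: "?P2 \<in> sets lebesgue" using Bl by (intro lebesgue_sets_translation) auto
  have s3: "?P3 \<in> sets lebesgue" using Bl by (intro lebesgue_sets_translation) auto
  have P2sub: "?P2 \<subseteq> ?I1" by auto
  have P3sub: "?P3 \<subseteq> ?I2" by auto
  have "emeasure lebesgue ((B - ?I) \<union> ?P2 \<union> ?P3) = emeasure lebesgue ((B - ?I) \<union> ?P2) + emeasure lebesgue ?P3"
    using s1 s2 s3 P2sub P3sub v by (intro plus_emeasure[symmetric]) auto
  also have "emeasure lebesgue ((B - ?I) \<union> ?P2) = emeasure lebesgue (B - ?I) + emeasure lebesgue ?P2"
    using s1 s2 P2sub v by (intro plus_emeasure[symmetric]) auto
  also have "emeasure lebesgue ?P2 = emeasure lebesgue (B \<inter> ?I2)" by (rule translate_emeasure)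
  also have "emeasure lebesgue ?P3 = emeasure lebesgue (B \<inter> ?I1)" by (rule translate_emeasure)
  also have "emeasure lebesgue (B - ?I) + emeasure lebesgue (B \<inter> ?I2) + emeasure lebesgue (B \<inter> ?I1)
      = emeasure lebesgue ((B - ?I) \<union> (B \<inter> ?I2) \<union> (B \<inter> ?I1))"
  proof -
    have "emeasure lebesgue ((B - ?I) \<union> (B \<inter> ?I2) \<union> (B \<inter> ?I1)) =
        emeasure lebesgue ((B - ?I) \<union> (B \<inter> ?I2)) + emeasure lebesgue (B \<inter> ?I1)"
      using Bl v by (intro plus_emeasure[symmetric]) (auto intro!: sets.Un sets.Diff sets.Int)
    also have "emeasure lebesgue ((B - ?I) \<union> (B \<inter> ?I2)) = emeasure lebesgue (B - ?I) + emeasure lebesgue (B \<inter> ?I2)"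
      using Bl v by (intro plus_emeasure[symmetric]) auto
    finally show ?thesis by simp
  qed
  also have "(B - ?I) \<union> (B \<inter> ?I2) \<union> (B \<inter> ?I1) = B" using v by auto
  finally have eq: "emeasure lebesgue (sw u v -` B \<inter> X) = emeasure lebesgue B"
    using sw_vimage[OF v I BX] by simp
  have "emeasure (distr M M (sw u v)) B = emeasure M (sw u v -` B \<inter> space M)"
    using B sw_meas[OF v I] by (simp add: emeasure_distr)
  also have "\<dots> = emeasure lebesgue (sw u v -` B \<inter> X)" by (simp add: space_M emeasure_M)
  finally show "emeasure (distr M M (sw u v)) B = emeasure M B" using eq emeasure_M[OF BX] by simp
qed

lemma pair_sw:
  assumes v: "0 < v" and I: "{u..<u+2 * v} \<subseteq> X" and v': "0 < v'" and I': "{u'..<u'+2 * v'} \<subseteq> X"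
  and C: "C \<in> sets (M \<Otimes>\<^sub>M M)"
  shows "emeasure (M \<Otimes>\<^sub>M M) ((\<lambda>(x, y). (sw u v x, sw u' v' y)) -` C \<inter> space (M \<Otimes>\<^sub>M M)) = emeasure (M \<Otimes>\<^sub>M M) C"
proof -
  have sf: "sigma_finite_measure (distr M M (sw u' v'))" using sw_distr[OF v' I'] sigma_finite_M by simp
  have "distr M M (sw u v) \<Otimes>\<^sub>M distr M M (sw u' v') = distr (M \<Otimes>\<^sub>M M) (M \<Otimes>\<^sub>M M) (\<lambda>(x, y). (sw u v x, sw u' v' y))"
    by (rule pair_measure_distr[OF sw_meas[OF v I] sw_meas[OF v' I'] sf])
  then have eq: "M \<Otimes>\<^sub>M M = distr (M \<Otimes>\<^sub>M M) (M \<Otimes>\<^sub>M M) (\<lambda>(x, y). (sw u v x, sw u' v' y))"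
    using sw_distr[OF v I] sw_distr[OF v' I'] by simp
  have meas: "(\<lambda>(x, y). (sw u v x, sw u' v' y)) \<in> measurable (M \<Otimes>\<^sub>M M) (M \<Otimes>\<^sub>M M)"
    using sw_meas[OF v I] sw_meas[OF v' I'] by measurable
  have "emeasure (M \<Otimes>\<^sub>M M) C = emeasure (distr (M \<Otimes>\<^sub>M M) (M \<Otimes>\<^sub>M M) (\<lambda>(x, y). (sw u v x, sw u' v' y))) C"
    by (subst eq[symmetric]) simp
  also have "\<dots> = emeasure (M \<Otimes>\<^sub>M M) ((\<lambda>(x, y). (sw u v x, sw u' v' y)) -` C \<inter> space (M \<Otimes>\<^sub>M M))"
    using C meas by (simp add: emeasure_distr)
  finally show ?thesis by simp
qed

end

definition sdiff :: "'a set \<Rightarrow> 'a set \<Rightarrow> 'a set" where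
  "sdiff A B = (A - B) \<union> (B - A)"

context rk begin

definition Nt :: "nat \<Rightarrow> nat \<Rightarrow> nat" where
  "Nt m t = H m * 4 ^ (t - m)"

lemma w_split: "m \<le> t \<Longrightarrow> w m = real (4 ^ (t - m)) * w t"
proof -
  assume "m \<le> t"
  then have t: "t = m + (t - m)" by simp
  have "w t = w m * (1/4) ^ (t - m)" by (subst t) (simp add: rk_w_def power_add)
  then show ?thesis by (simp add: power_one_over)
qed

lemma S_Nt: "m \<le> t \<Longrightarrow> S m = real (Nt m t) * w t"
  by (simp add: S_eq Nt_def w_split)

lemma grid1: "m \<le> t \<Longrightarrow> {0..<S m} = (\<Union>i\<in>{..<Nt m t}. iv t i)"
proof (intro equalityI subsetI)
  fix x assume mt: "m \<le> t" and x: "x \<in> {0..<S m}"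
  then have x0: "0 \<le> x" and xl: "x < real (Nt m t) * w t" using S_Nt by auto
  show "x \<in> (\<Union>i\<in>{..<Nt m t}. iv t i)"
    using iv_floor[OF x0, of t] iv_lt[OF iv_floor[OF x0] x0 xl] by blast
next
  fix x assume mt: "m \<le> t" and x: "x \<in> (\<Union>i\<in>{..<Nt m t}. iv t i)"
  then obtain i where i: "i < Nt m t" "x \<in> iv t i" by blast
  have "real (Suc i) * w t \<le> real (Nt m t) * w t" using i w_pos[of t] by (intro mult_right_mono) auto
  then show "x \<in> {0..<S m}" using iv_bound[OF i(2)] iv_nonneg[OF i(2)] S_Nt[OF mt] by auto
qed

lemma iv_disj: "i \<noteq> i' \<Longrightarrow> iv t i \<inter> iv t i' = {}"
  using iv_unique by blast

lemma iv_nest: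
  assumes tt: "t \<le> t'" and x: "x \<in> iv t i" "x \<in> iv t' i'"
  shows "iv t' i' \<subseteq> iv t i"
proof -
  define k where "k = (4::nat) ^ (t' - t)"
  have wk: "w t = real k * w t'" using w_split[OF tt] by (simp add: k_def)
  have wp: "0 < w t'" by (rule w_pos)
  from x have b1: "real i * w t \<le> x" "x < real (Suc i) * w t" by (auto simp: iv_def)
  from x have b2: "real i' * w t' \<le> x" "x < real (Suc i') * w t'" by (auto simp: iv_def)
  have "real (i * k) * w t' < real (Suc i') * w t'" using b1 b2 wk by (simp add: algebra_simps)
  then have "real (i * k) < real (Suc i')" using wp by (meson mult_less_cancel_right_pos)
  then have "i * k < Suc i'" by (simp only: of_nat_less_iff)
  then have l1: "i * k \<le> i'" by simp
  have "real i' * w t' < real (Suc i * k) * w t'" using b1 b2 wk by (simp add: algebra_simps)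
  then have "real i' < real (Suc i * k)" using wp by (meson mult_less_cancel_right_pos)
  then have "i' < Suc i * k" by (simp only: of_nat_less_iff)
  then have l2: "Suc i' \<le> Suc i * k" by simp
  show ?thesis
  proof
    fix y assume y: "y \<in> iv t' i'"
    have "real i * w t = real (i * k) * w t'" using wk by simp
    also have "\<dots> \<le> real i' * w t'" using l1 wp by (intro mult_right_mono) (simp only: of_nat_le_iff, simp)
    also have "\<dots> \<le> y" using y by (simp add: iv_def)
    finally have 1: "real i * w t \<le> y" .
    have "y < real (Suc i') * w t'" using y by (simp add: iv_def)
    also have "\<dots> \<le> real (Suc i * k) * w t'" using l2 wp by (intro mult_right_mono) (simp only: of_nat_le_iff, simp)
    also have "\<dots> = real (Suc i) * w t" using wk by (simp add: algebra_simps)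
    finally show "y \<in> iv t i" using 1 by (simp add: iv_def)
  qed
qed

lemma iv_sets: "iv t i \<in> sets lebesgue" by (simp add: iv_def)

lemma iv_diam: "x \<in> iv t i \<Longrightarrow> y \<in> iv t i \<Longrightarrow> \<bar>x - y\<bar> < w t"
  by (auto simp: iv_def algebra_simps)

lemma approx1:
  assumes B: "B \<in> sets lebesgue" "B \<subseteq> {0..<S m}" and dp: "0 < \<delta>"
  shows "\<exists>t0\<ge>m. \<forall>t\<ge>t0. \<exists>Z\<subseteq>{..<Nt m t}. measure lebesgue (sdiff B (\<Union>i\<in>Z. iv t i)) < \<delta>"
proof -
  have d2: "0 < \<delta>/2" using dp by simp
  obtain U where U: "open U" "B \<subseteq> U" "(U - B) \<in> lmeasurable" "emeasure lebesgue (U - B) < ennreal (\<delta>/2)"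
    using sets_lebesgue_outer_open[OF B(1) d2] by blast
  have mUB: "measure lebesgue (U - B) < \<delta>/2"
    using U(3,4) d2 by (simp add: emeasure_eq_measure2 ennreal_less_iff)
  define Zt where "Zt t = {i. i < Nt m t \<and> iv t i \<subseteq> U}" for t
  define V where "V t = (\<Union>i\<in>Zt t. iv t i)" for t
  have Vsets: "V t \<in> sets lebesgue" for t
    unfolding V_def Zt_def by (intro sets.finite_UN iv_sets) auto
  have VU: "V t \<subseteq> U" for t unfolding V_def Zt_def by auto
  have Vmono: "V t \<subseteq> V t'" if "m \<le> t" "t \<le> t'" for t t'
  proof
    fix x assume "x \<in> V t"
    then obtain i where i: "i < Nt m t" "iv t i \<subseteq> U" "x \<in> iv t i" by (auto simp: V_def Zt_def)
    have x0: "0 \<le> x" using iv_nonneg[OF i(3)] .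
    let ?i' = "nat \<lfloor>x / w t'\<rfloor>"
    have xi': "x \<in> iv t' ?i'" by (rule iv_floor[OF x0])
    have "x \<in> {0..<S m}" using grid1[OF that(1)] i by blast
    then have "x < real (Nt m t') * w t'" using S_Nt[of m t'] that by simp
    then have "?i' < Nt m t'" using iv_lt[OF xi' x0] by simp
    moreover have "iv t' ?i' \<subseteq> U" using iv_nest[OF that(2) i(3) xi'] i(2) by blast
    ultimately show "x \<in> V t'" using xi' by (auto simp: V_def Zt_def)
  qed
  define D where "D n = B - V (m + n)" for n
  have Dsets: "range D \<subseteq> sets lebesgue" using B Vsets by (auto simp: D_def)
  have Ddec: "decseq D"
  proof (rule decseq_SucI)
    fix n show "D (Suc n) \<subseteq> D n" using Vmono[of "m+n" "m + Suc n"] by (auto simp: D_def)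
  qed
  have Dfin: "emeasure lebesgue (D n) \<noteq> \<infinity>" for n
  proof -
    have "emeasure lebesgue (D n) \<le> emeasure lebesgue {0..<S m}"
      using B Vsets by (intro emeasure_mono) (auto simp: D_def)
    also have "\<dots> < \<infinity>" using S_pos[of m] by simp
    finally show ?thesis by simp
  qed
  have Dint: "(\<Inter>n. D n) = {}"
  proof (rule ccontr)
    assume "(\<Inter>n. D n) \<noteq> {}"
    then obtain x where x: "\<And>n. x \<in> D n" by blast
    then have xB: "x \<in> B" by (auto simp: D_def)
    then have x0: "0 \<le> x" "x < S m" using B by auto
    obtain r where r: "0 < r" "ball x r \<subseteq> U" using U(1,2) xB open_contains_ball by blast
    obtain n1 where n1: "(1/4::real) ^ n1 < r" using real_arch_pow_inv[OF r(1), of "1/4"] by auto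
    let ?t = "m + n1"
    have "w ?t \<le> w n1" by (rule w_mono) simp
    moreover have "w n1 < r" using n1 by (simp add: rk_w_def)
    ultimately have wt: "w ?t < r" by linarith
    let ?i = "nat \<lfloor>x / w ?t\<rfloor>"
    have xi: "x \<in> iv ?t ?i" by (rule iv_floor[OF x0(1)])
    have "x < real (Nt m ?t) * w ?t" using S_Nt[of m ?t] x0 by simp
    then have "?i < Nt m ?t" using iv_lt[OF xi x0(1)] by simp
    moreover have "iv ?t ?i \<subseteq> U"
    proof
      fix y assume "y \<in> iv ?t ?i"
      then have "\<bar>y - x\<bar> < r" using iv_diam[OF _ xi] wt by force
      then show "y \<in> U" using r(2) by (auto simp: dist_real_def)
    qed
    ultimately have "x \<in> V ?t" using xi by (auto simp: V_def Zt_def)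
    then show False using x[of n1] by (auto simp: D_def)
  qed
  have lim: "(\<lambda>n. measure lebesgue (D n)) \<longlonglongrightarrow> 0"
    using Lim_measure_decseq[OF Dsets Ddec Dfin] Dint by simp
  then have "\<exists>n0. \<forall>n\<ge>n0. measure lebesgue (D n) < \<delta>/2"
    using d2 unfolding lim_sequentially dist_real_def by (metis abs_of_nonneg diff_zero measure_nonneg)
  then obtain n0 where n0: "\<And>n. n \<ge> n0 \<Longrightarrow> measure lebesgue (D n) < \<delta>/2" by blast
  show ?thesis
  proof (intro exI[of _ "m + n0"] conjI allI impI)
    fix t assume t: "m + n0 \<le> t"
    show "\<exists>Z\<subseteq>{..<Nt m t}. measure lebesgue (sdiff B (\<Union>i\<in>Z. iv t i)) < \<delta>"
    proof (intro exI[of _ "Zt t"] conjI)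
      show "Zt t \<subseteq> {..<Nt m t}" by (auto simp: Zt_def)
      have tt: "t = m + (t - m)" using t by simp
      have "sdiff B (V t) \<subseteq> D (t - m) \<union> (U - B)" using VU tt by (auto simp: sdiff_def D_def)
      moreover have "D (t - m) \<in> fmeasurable lebesgue" using Dsets Dfin[of "t - m"]
        by (auto simp: fmeasurable_def less_top)
      ultimately have "measure lebesgue (sdiff B (V t)) \<le> measure lebesgue (D (t - m) \<union> (U - B))"
        using U(3) B Vsets
        by (intro measure_mono_fmeasurable fmeasurable.Un) (auto simp: sdiff_def)
      also have "\<dots> \<le> measure lebesgue (D (t - m)) + measure lebesgue (U - B)"
        using Dsets U(3) by (intro measure_Un_le) auto
      also have "\<dots> < \<delta>/2 + \<delta>/2" using n0[of "t - m"] t mUB by (intro add_strict_mono) auto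
      finally show "measure lebesgue (sdiff B (\<Union>i\<in>Zt t. iv t i)) < \<delta>" by (simp add: V_def)
    qed
  qed simp
qed

end

context rk begin

abbreviation "MM \<equiv> M \<Otimes>\<^sub>M M"

definition L :: "nat \<Rightarrow> real set" where "L m = {0..<S m}"
definition K :: "nat \<Rightarrow> (real \<times> real) set" where "K m = L m \<times> L m"
definition U2 :: "nat \<Rightarrow> (nat \<times> nat) set \<Rightarrow> (real \<times> real) set" where
  "U2 t Z = (\<Union>p\<in>Z. iv t (fst p) \<times> iv t (snd p))"
definition U1 :: "nat \<Rightarrow> nat set \<Rightarrow> real set" where
  "U1 t Z = (\<Union>i\<in>Z. iv t i)"

definition P2 :: "nat \<Rightarrow> (real \<times> real) set \<Rightarrow> bool" where
  "P2 m E \<longleftrightarrow> (\<forall>\<delta>>0. \<exists>t0\<ge>m. \<forall>t\<ge>t0. \<exists>Z\<subseteq>{..<Nt m t} \<times> {..<Nt m t}. measure MM (sdiff E (U2 t Z)) < \<delta>)"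

interpretation sfM: sigma_finite_measure M by (rule sigma_finite_M)

lemma space_MM: "space MM = X \<times> X" by (simp add: space_pair_measure space_M)

lemma L_X: "L m \<subseteq> X" using Ico_X by (simp add: L_def)
lemma L_sets: "L m \<in> sets M" using L_X by (simp add: sets_M L_def)
lemma K_sets: "K m \<in> sets MM" using L_sets by (simp add: K_def)

lemma emeasure_MM_Times: "A \<in> sets M \<Longrightarrow> B \<in> sets M \<Longrightarrow> emeasure MM (A \<times> B) = emeasure M A * emeasure M B"
  by (rule sfM.emeasure_pair_measure_Times)

lemma emeasure_L: "emeasure M (L m) = ennreal (S m)"
  using L_X S_pos[of m] by (simp add: emeasure_M L_def less_imp_le)

lemma K_fin: "emeasure MM (K m) < \<infinity>"
  using L_sets by (simp add: K_def emeasure_MM_Times emeasure_L ennreal_mult_less_top)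

lemma K_fmeas: "K m \<in> fmeasurable MM"
  using K_fin K_sets by (intro fmeasurableI) auto

lemma sub_K_fmeas: "E \<in> sets MM \<Longrightarrow> E \<subseteq> K m \<Longrightarrow> E \<in> fmeasurable MM"
  by (rule fmeasurableI2[OF K_fmeas])

lemma iv_sub_L: "m \<le> t \<Longrightarrow> i < Nt m t \<Longrightarrow> iv t i \<subseteq> L m"
  using grid1[of m t] by (auto simp: L_def)

lemma iv_sets_M: "m \<le> t \<Longrightarrow> i < Nt m t \<Longrightarrow> iv t i \<in> sets M"
  using iv_sub_L[of m t i] L_X[of m] iv_sets[of t i] by (auto simp: sets_M)

lemma U2_sets: "m \<le> t \<Longrightarrow> Z \<subseteq> {..<Nt m t} \<times> {..<Nt m t} \<Longrightarrow> U2 t Z \<in> sets MM"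
  unfolding U2_def
  by (intro sets.finite_UN pair_measureI iv_sets_M) (auto intro: finite_subset)

lemma U2_sub: "m \<le> t \<Longrightarrow> Z \<subseteq> {..<Nt m t} \<times> {..<Nt m t} \<Longrightarrow> U2 t Z \<subseteq> K m"
  unfolding U2_def K_def using iv_sub_L by fastforce

lemma U1_sets: "m \<le> t \<Longrightarrow> Z \<subseteq> {..<Nt m t} \<Longrightarrow> U1 t Z \<in> sets lebesgue"
  unfolding U1_def by (intro sets.finite_UN iv_sets) (auto intro: finite_subset)

lemma U1_sub: "m \<le> t \<Longrightarrow> Z \<subseteq> {..<Nt m t} \<Longrightarrow> U1 t Z \<subseteq> L m"
  unfolding U1_def using iv_sub_L by fastforce

lemma U2_Times: "U2 t (Z1 \<times> Z2) = U1 t Z1 \<times> U1 t Z2"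
  unfolding U2_def U1_def by auto

lemma K_grid: "m \<le> t \<Longrightarrow> K m = U2 t ({..<Nt m t} \<times> {..<Nt m t})"
  using grid1[of m t] by (simp add: K_def L_def U2_Times U1_def)

lemma sq_unique: "z \<in> iv t i \<times> iv t j \<Longrightarrow> z \<in> iv t i' \<times> iv t j' \<Longrightarrow> i = i' \<and> j = j'"
  using iv_unique by (cases z) auto

lemma U2_compl: "m \<le> t \<Longrightarrow> Z \<subseteq> {..<Nt m t} \<times> {..<Nt m t} \<Longrightarrow>
    U2 t ({..<Nt m t} \<times> {..<Nt m t} - Z) = K m - U2 t Z"
proof (intro equalityI subsetI)
  fix z assume mt: "m \<le> t" and Z: "Z \<subseteq> {..<Nt m t} \<times> {..<Nt m t}"
    and z: "z \<in> U2 t ({..<Nt m t} \<times> {..<Nt m t} - Z)"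
  then obtain p where p: "p \<in> {..<Nt m t} \<times> {..<Nt m t} - Z" "z \<in> iv t (fst p) \<times> iv t (snd p)"
    by (auto simp: U2_def)
  have "z \<in> U2 t ({..<Nt m t} \<times> {..<Nt m t})" using p unfolding U2_def by blast
  then have "z \<in> K m" using K_grid[OF mt] by simp
  moreover have "z \<notin> U2 t Z"
  proof
    assume "z \<in> U2 t Z"
    then obtain p' where "p' \<in> Z" and pz: "z \<in> iv t (fst p') \<times> iv t (snd p')" unfolding U2_def by blast
    have "fst p = fst p' \<and> snd p = snd p'" by (rule sq_unique[OF p(2) pz])
    then have "p' = p" by (simp add: prod_eq_iff)
    then show False using p \<open>p' \<in> Z\<close> by auto
  qed
  ultimately show "z \<in> K m - U2 t Z" by simp
next
  fix z assume mt: "m \<le> t" and Z: "Z \<subseteq> {..<Nt m t} \<times> {..<Nt m t}" and z: "z \<in> K m - U2 t Z"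
  then obtain p where p: "p \<in> {..<Nt m t} \<times> {..<Nt m t}" "z \<in> iv t (fst p) \<times> iv t (snd p)"
    using K_grid[OF mt] by (auto simp: U2_def)
  have "p \<notin> Z" using z p unfolding U2_def by blast
  then show "z \<in> U2 t ({..<Nt m t} \<times> {..<Nt m t} - Z)" using p unfolding U2_def by blast
qed

lemma measure_strip1: "P \<in> sets lebesgue \<Longrightarrow> P \<subseteq> L m \<Longrightarrow> measure MM (P \<times> L m) = measure lebesgue P * S m"
proof -
  assume P: "P \<in> sets lebesgue" "P \<subseteq> L m"
  then have PM: "P \<in> sets M" using L_X by (auto simp: sets_M)
  have eP: "emeasure M P = emeasure lebesgue P" using emeasure_M[of P] P(2) L_X[of m] by blast
  have "emeasure MM (P \<times> L m) = emeasure lebesgue P * ennreal (S m)"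
    using emeasure_MM_Times[OF PM L_sets] emeasure_L eP by simp
  moreover have "emeasure lebesgue P = ennreal (measure lebesgue P)"
  proof -
    have "emeasure lebesgue P \<le> emeasure lebesgue (L m)" using P by (intro emeasure_mono) (auto simp: L_def)
    also have "\<dots> < \<infinity>" using S_pos[of m] by (simp add: L_def less_imp_le)
    finally show ?thesis using P by (intro emeasure_eq_measure2 fmeasurableI) auto
  qed
  ultimately have "emeasure MM (P \<times> L m) = ennreal (measure lebesgue P * S m)"
    using S_pos[of m] by (simp add: ennreal_mult)
  then show ?thesis by (rule measure_eq_emeasure_eq_ennreal[rotated]) (use S_pos[of m] in simp)
qed

lemma measure_strip2: "P \<in> sets lebesgue \<Longrightarrow> P \<subseteq> L m \<Longrightarrow> measure MM (L m \<times> P) = S m * measure lebesgue P"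
proof -
  assume P: "P \<in> sets lebesgue" "P \<subseteq> L m"
  then have PM: "P \<in> sets M" using L_X by (auto simp: sets_M)
  have eP: "emeasure M P = emeasure lebesgue P" using emeasure_M[of P] P(2) L_X[of m] by blast
  have "emeasure MM (L m \<times> P) = ennreal (S m) * emeasure lebesgue P"
    using emeasure_MM_Times[OF L_sets PM] emeasure_L eP by simp
  moreover have "emeasure lebesgue P = ennreal (measure lebesgue P)"
  proof -
    have "emeasure lebesgue P \<le> emeasure lebesgue (L m)" using P by (intro emeasure_mono) (auto simp: L_def)
    also have "\<dots> < \<infinity>" using S_pos[of m] by (simp add: L_def less_imp_le)
    finally show ?thesis using P by (intro emeasure_eq_measure2 fmeasurableI) auto
  qed
  ultimately have "emeasure MM (L m \<times> P) = ennreal (S m * measure lebesgue P)"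
    using S_pos[of m] by (simp add: ennreal_mult)
  then show ?thesis by (rule measure_eq_emeasure_eq_ennreal[rotated]) (use S_pos[of m] in simp)
qed

end

context rk begin



lemma leb_sub_L_M: "P \<in> sets lebesgue \<Longrightarrow> P \<subseteq> L m \<Longrightarrow> P \<in> sets M"
  using L_X[of m] by (auto simp: sets_M)

lemma basic_case:
  assumes A1: "A1 \<in> sets M" and B1: "B1 \<in> sets M"
  shows "P2 m ((A1 \<times> B1) \<inter> K m)"
  unfolding P2_def
proof (intro allI impI)
  fix \<delta> :: real assume dp: "0 < \<delta>"
  define aa where "aa = A1 \<inter> L m"
  define bb where "bb = B1 \<inter> L m"
  have ab: "(A1 \<times> B1) \<inter> K m = aa \<times> bb" by (auto simp: aa_def bb_def K_def)
  have aal: "aa \<in> sets lebesgue" "aa \<subseteq> {0..<S m}" using A1 L_sets by (auto simp: aa_def sets_M L_def)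
  have bbl: "bb \<in> sets lebesgue" "bb \<subseteq> {0..<S m}" using B1 L_sets by (auto simp: bb_def sets_M L_def)
  have Sp: "0 < S m" by (rule S_pos)
  define \<delta>1 where "\<delta>1 = \<delta> / (2 * S m)"
  have d1: "0 < \<delta>1" using dp Sp by (simp add: \<delta>1_def)
  obtain t1 where t1: "t1 \<ge> m" "\<forall>t\<ge>t1. \<exists>Z\<subseteq>{..<Nt m t}. measure lebesgue (sdiff aa (\<Union>i\<in>Z. iv t i)) < \<delta>1"
    using approx1[OF aal d1] by blast
  obtain t2 where t2: "t2 \<ge> m" "\<forall>t\<ge>t2. \<exists>Z\<subseteq>{..<Nt m t}. measure lebesgue (sdiff bb (\<Union>i\<in>Z. iv t i)) < \<delta>1"
    using approx1[OF bbl d1] by blast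
  show "\<exists>t0\<ge>m. \<forall>t\<ge>t0. \<exists>Z\<subseteq>{..<Nt m t} \<times> {..<Nt m t}. measure MM (sdiff ((A1 \<times> B1) \<inter> K m) (U2 t Z)) < \<delta>"
  proof (intro exI[of _ "max t1 t2"] conjI allI impI)
    show "m \<le> max t1 t2" using t1 by simp
    fix t assume t: "max t1 t2 \<le> t"
    then have mt: "m \<le> t" using t1 by simp
    obtain Z1 where Z1: "Z1 \<subseteq> {..<Nt m t}" "measure lebesgue (sdiff aa (U1 t Z1)) < \<delta>1"
      using t1(2) t unfolding U1_def by auto
    obtain Z2 where Z2: "Z2 \<subseteq> {..<Nt m t}" "measure lebesgue (sdiff bb (U1 t Z2)) < \<delta>1"
      using t2(2) t unfolding U1_def by auto
    define F1 where "F1 = U1 t Z1"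
    define F2 where "F2 = U1 t Z2"
    have F1: "F1 \<in> sets lebesgue" "F1 \<subseteq> L m" using U1_sets[OF mt Z1(1)] U1_sub[OF mt Z1(1)] by (auto simp: F1_def)
    have F2: "F2 \<in> sets lebesgue" "F2 \<subseteq> L m" using U1_sets[OF mt Z2(1)] U1_sub[OF mt Z2(1)] by (auto simp: F2_def)
    define D1 where "D1 = sdiff aa F1"
    define D2 where "D2 = sdiff bb F2"
    have D1: "D1 \<in> sets lebesgue" "D1 \<subseteq> L m" using F1 aal by (auto simp: D1_def sdiff_def L_def)
    have D2: "D2 \<in> sets lebesgue" "D2 \<subseteq> L m" using F2 bbl by (auto simp: D2_def sdiff_def L_def)
    have sub: "sdiff (aa \<times> bb) (F1 \<times> F2) \<subseteq> (D1 \<times> L m) \<union> (L m \<times> D2)"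
      using aal bbl F1 F2 by (auto simp: sdiff_def D1_def D2_def L_def)
    have s1: "D1 \<times> L m \<in> sets MM" using leb_sub_L_M[OF D1] L_sets by auto
    have s2: "L m \<times> D2 \<in> sets MM" using leb_sub_L_M[OF D2] L_sets by auto
    have sK: "(D1 \<times> L m) \<union> (L m \<times> D2) \<subseteq> K m" using D1 D2 by (auto simp: K_def)
    have sd: "sdiff (aa \<times> bb) (F1 \<times> F2) \<in> sets MM"
      unfolding sdiff_def using leb_sub_L_M[OF aal(1)] leb_sub_L_M[OF bbl(1)] leb_sub_L_M[OF F1] leb_sub_L_M[OF F2]
        aal(2) bbl(2) by (auto simp: L_def)
    have "measure MM (sdiff (aa \<times> bb) (F1 \<times> F2)) \<le> measure MM ((D1 \<times> L m) \<union> (L m \<times> D2))"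
      by (rule measure_mono_fmeasurable[OF sub sd sub_K_fmeas[OF sets.Un[OF s1 s2] sK]])
    also have "\<dots> \<le> measure MM (D1 \<times> L m) + measure MM (L m \<times> D2)"
      by (rule measure_Un_le[OF s1 s2])
    also have "\<dots> = measure lebesgue D1 * S m + S m * measure lebesgue D2"
      using measure_strip1[OF D1] measure_strip2[OF D2] by simp
    also have "\<dots> < \<delta>1 * S m + S m * \<delta>1"
      using Z1(2) Z2(2) Sp by (intro add_strict_mono) (auto simp: D1_def D2_def F1_def F2_def)
    also have "\<dots> = \<delta>" using Sp by (simp add: \<delta>1_def)
    finally have "measure MM (sdiff (aa \<times> bb) (F1 \<times> F2)) < \<delta>" .
    moreover have "U2 t (Z1 \<times> Z2) = F1 \<times> F2" by (simp add: U2_Times F1_def F2_def)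
    ultimately show "\<exists>Z\<subseteq>{..<Nt m t} \<times> {..<Nt m t}. measure MM (sdiff ((A1 \<times> B1) \<inter> K m) (U2 t Z)) < \<delta>"
      using Z1(1) Z2(1) ab by (intro exI[of _ "Z1 \<times> Z2"]) auto
  qed
qed

lemma compl_case:
  assumes E: "E \<in> sets MM" and IH: "P2 m (E \<inter> K m)"
  shows "P2 m ((X \<times> X - E) \<inter> K m)"
  unfolding P2_def
proof (intro allI impI)
  fix \<delta> :: real assume dp: "0 < \<delta>"
  obtain t0 where t0: "t0 \<ge> m" "\<forall>t\<ge>t0. \<exists>Z\<subseteq>{..<Nt m t} \<times> {..<Nt m t}. measure MM (sdiff (E \<inter> K m) (U2 t Z)) < \<delta>"
    using IH dp unfolding P2_def by blast
  have KX: "K m \<subseteq> X \<times> X" using L_X by (auto simp: K_def)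
  show "\<exists>t0\<ge>m. \<forall>t\<ge>t0. \<exists>Z\<subseteq>{..<Nt m t} \<times> {..<Nt m t}. measure MM (sdiff ((X \<times> X - E) \<inter> K m) (U2 t Z)) < \<delta>"
  proof (intro exI[of _ t0] conjI allI impI)
    show "m \<le> t0" by (rule t0(1))
    fix t assume t: "t0 \<le> t"
    then have mt: "m \<le> t" using t0 by simp
    obtain Z where Z: "Z \<subseteq> {..<Nt m t} \<times> {..<Nt m t}" "measure MM (sdiff (E \<inter> K m) (U2 t Z)) < \<delta>"
      using t0(2) t by blast
    let ?Z' = "{..<Nt m t} \<times> {..<Nt m t} - Z"
    have eq: "U2 t ?Z' = K m - U2 t Z" by (rule U2_compl[OF mt Z(1)])
    have sub: "sdiff ((X \<times> X - E) \<inter> K m) (U2 t ?Z') \<subseteq> sdiff (E \<inter> K m) (U2 t Z)"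
      unfolding eq using U2_sub[OF mt Z(1)] KX by (auto simp: sdiff_def)
    have s1: "sdiff ((X \<times> X - E) \<inter> K m) (U2 t ?Z') \<in> sets MM"
      unfolding sdiff_def using E K_sets U2_sets[OF mt, of ?Z'] space_MM
      by (intro sets.Un sets.Diff sets.Int) (auto simp flip: space_MM)
    have s2: "sdiff (E \<inter> K m) (U2 t Z) \<in> sets MM"
      unfolding sdiff_def using E K_sets U2_sets[OF mt Z(1)] by auto
    have s2K: "sdiff (E \<inter> K m) (U2 t Z) \<subseteq> K m"
      using U2_sub[OF mt Z(1)] by (auto simp: sdiff_def)
    have "measure MM (sdiff ((X \<times> X - E) \<inter> K m) (U2 t ?Z')) \<le> measure MM (sdiff (E \<inter> K m) (U2 t Z))"
      by (rule measure_mono_fmeasurable[OF sub s1 sub_K_fmeas[OF s2 s2K]])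
    then show "\<exists>Z\<subseteq>{..<Nt m t} \<times> {..<Nt m t}. measure MM (sdiff ((X \<times> X - E) \<inter> K m) (U2 t Z)) < \<delta>"
      using Z(2) by (intro exI[of _ ?Z']) auto
  qed
qed

end

context rk begin

lemma union_case:
  fixes A :: "nat \<Rightarrow> (real \<times> real) set"
  assumes A: "\<And>i. A i \<in> sets MM" and IH: "\<And>i. P2 m (A i \<inter> K m)"
  shows "P2 m ((\<Union>i. A i) \<inter> K m)"
  unfolding P2_def
proof (intro allI impI)
  fix \<delta> :: real assume dp: "0 < \<delta>"
  define E where "E i = A i \<inter> K m" for i
  have Es: "E i \<in> sets MM" for i using A K_sets by (simp add: E_def)
  define D where "D n = (\<Union>i. E i) - (\<Union>i<n. E i)" for n
  have UE: "(\<Union>i. A i) \<inter> K m = (\<Union>i. E i)" by (auto simp: E_def)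
  have Ds: "range D \<subseteq> sets MM" using Es by (auto simp: D_def)
  have Ddec: "decseq D"
  proof (rule decseq_SucI)
    fix n show "D (Suc n) \<subseteq> D n" by (auto simp: D_def lessThan_Suc)
  qed
  have Dfin: "emeasure MM (D n) \<noteq> \<infinity>" for n
  proof -
    have "D n \<subseteq> K m" by (auto simp: D_def E_def)
    then have "D n \<in> fmeasurable MM" using Ds by (intro sub_K_fmeas) auto
    then show ?thesis by (auto simp: fmeasurable_def)
  qed
  have Dint: "(\<Inter>n. D n) = {}"
  proof (rule ccontr)
    assume "(\<Inter>n. D n) \<noteq> {}"
    then obtain x where x: "\<And>n. x \<in> D n" by blast
    then obtain i where "x \<in> E i" by (auto simp: D_def)
    then show False using x[of "Suc i"] by (auto simp: D_def)
  qed
  have lim: "(\<lambda>n. measure MM (D n)) \<longlonglongrightarrow> 0"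
    using Lim_measure_decseq[OF Ds Ddec Dfin] Dint by simp
  have d2: "0 < \<delta>/2" using dp by simp
  have "\<exists>N. \<forall>n\<ge>N. measure MM (D n) < \<delta>/2"
    using lim d2 unfolding lim_sequentially dist_real_def by (metis abs_of_nonneg diff_zero measure_nonneg)
  then obtain N where N: "measure MM (D N) < \<delta>/2" by blast
  define \<delta>' where "\<delta>' = \<delta> / (2 * (real N + 1))"
  have d': "0 < \<delta>'" using dp by (simp add: \<delta>'_def)
  have "\<forall>i. \<exists>t0. m \<le> t0 \<and> (\<forall>t\<ge>t0. \<exists>Z\<subseteq>{..<Nt m t} \<times> {..<Nt m t}. measure MM (sdiff (E i) (U2 t Z)) < \<delta>')"
    using IH d' unfolding P2_def E_def by blast
  then obtain t0f where t0f: "\<And>i. m \<le> t0f i" "\<And>i t. t0f i \<le> t \<Longrightarrow> \<exists>Z\<subseteq>{..<Nt m t} \<times> {..<Nt m t}. measure MM (sdiff (E i) (U2 t Z)) < \<delta>'"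
    by metis
  define T0 where "T0 = m + (\<Sum>i<N. t0f i)"
  show "\<exists>t0\<ge>m. \<forall>t\<ge>t0. \<exists>Z\<subseteq>{..<Nt m t} \<times> {..<Nt m t}. measure MM (sdiff ((\<Union>i. A i) \<inter> K m) (U2 t Z)) < \<delta>"
  proof (intro exI[of _ T0] conjI allI impI)
    show "m \<le> T0" by (simp add: T0_def)
    fix t assume t: "T0 \<le> t"
    then have mt: "m \<le> t" by (simp add: T0_def)
    have "t0f i \<le> t" if "i < N" for i
    proof -
      have "t0f i \<le> (\<Sum>i<N. t0f i)" using that by (intro member_le_sum) auto
      then show ?thesis using t by (simp add: T0_def)
    qed
    then have "\<forall>i. \<exists>Z. i < N \<longrightarrow> Z \<subseteq> {..<Nt m t} \<times> {..<Nt m t} \<and> measure MM (sdiff (E i) (U2 t Z)) < \<delta>'"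
      using t0f(2) by blast
    then obtain Zf where Zf: "\<And>i. i < N \<Longrightarrow> Zf i \<subseteq> {..<Nt m t} \<times> {..<Nt m t}"
        "\<And>i. i < N \<Longrightarrow> measure MM (sdiff (E i) (U2 t (Zf i))) < \<delta>'"
      by metis
    define Z where "Z = (\<Union>i<N. Zf i)"
    have Z: "Z \<subseteq> {..<Nt m t} \<times> {..<Nt m t}" using Zf(1) by (auto simp: Z_def)
    have U2Z: "U2 t Z = (\<Union>i<N. U2 t (Zf i))" by (auto simp: Z_def U2_def)
    define G where "G i = sdiff (E i) (U2 t (Zf i))" for i
    have Gs: "G i \<in> sets MM" if "i < N" for i
      unfolding G_def sdiff_def using Es U2_sets[OF mt Zf(1)[OF that]] by auto
    have sub: "sdiff (\<Union>i. E i) (U2 t Z) \<subseteq> D N \<union> (\<Union>i<N. G i)"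
    proof
      fix x assume "x \<in> sdiff (\<Union>i. E i) (U2 t Z)"
      then consider "x \<in> (\<Union>i. E i)" "x \<notin> U2 t Z" | "x \<in> U2 t Z" "x \<notin> (\<Union>i. E i)"
        by (auto simp: sdiff_def)
      then show "x \<in> D N \<union> (\<Union>i<N. G i)"
      proof cases
        case 1
        show ?thesis
        proof (cases "x \<in> (\<Union>i<N. E i)")
          case True
          then obtain i where "i < N" "x \<in> E i" by blast
          then show ?thesis using 1 U2Z by (auto simp: G_def sdiff_def)
        next
          case False then show ?thesis using 1 by (auto simp: D_def)
        qed
      next
        case 2
        then obtain i where "i < N" "x \<in> U2 t (Zf i)" using U2Z by auto
        then show ?thesis using 2 by (auto simp: G_def sdiff_def)
      qed
    qed
    have UGs: "(\<Union>i<N. G i) \<in> sets MM" using Gs by (intro sets.finite_UN) auto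
    have sK: "D N \<union> (\<Union>i<N. G i) \<subseteq> K m"
      using U2_sub[OF mt Zf(1)] by (auto simp: D_def E_def G_def sdiff_def)
    have s0: "sdiff (\<Union>i. E i) (U2 t Z) \<in> sets MM"
      unfolding sdiff_def using Es U2_sets[OF mt Z] by (intro sets.Un sets.Diff sets.countable_UN) auto
    have "measure MM (sdiff (\<Union>i. E i) (U2 t Z)) \<le> measure MM (D N \<union> (\<Union>i<N. G i))"
      using Ds UGs by (intro measure_mono_fmeasurable[OF sub s0] sub_K_fmeas[OF _ sK]) auto
    also have "\<dots> \<le> measure MM (D N) + measure MM (\<Union>i<N. G i)"
      using Ds UGs by (intro measure_Un_le) auto
    also have "measure MM (\<Union>i<N. G i) \<le> (\<Sum>i<N. measure MM (G i))"
      using Gs by (intro measure_UNION_le) auto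
    also have "(\<Sum>i<N. measure MM (G i)) \<le> (\<Sum>i<N. \<delta>')"
      using Zf(2) by (intro sum_mono) (auto simp: G_def less_imp_le)
    also have "(\<Sum>i<N. \<delta>') = real N * \<delta>'" by simp
    finally have bound: "measure MM (sdiff (\<Union>i. E i) (U2 t Z)) \<le> measure MM (D N) + real N * \<delta>'"
      by simp
    have "real N * \<delta>' < \<delta>/2"
    proof -
      have "real N * \<delta>' = \<delta>/2 * (real N / (real N + 1))" by (simp add: \<delta>'_def field_simps)
      also have "\<dots> < \<delta>/2 * 1" using d2 by (intro mult_strict_left_mono) auto
      finally show ?thesis by simp
    qed
    then have "measure MM (sdiff (\<Union>i. E i) (U2 t Z)) < \<delta>" using bound N by simp
    then show "\<exists>Z\<subseteq>{..<Nt m t} \<times> {..<Nt m t}. measure MM (sdiff ((\<Union>i. A i) \<inter> K m) (U2 t Z)) < \<delta>"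
      using Z UE by (intro exI[of _ Z]) auto
  qed
qed

lemma approx2:
  assumes E: "E \<in> sets MM"
  shows "P2 m (E \<inter> K m)"
proof -
  have "E \<in> sigma_sets (X \<times> X) {a \<times> b | a b. a \<in> sets M \<and> b \<in> sets M}"
    using E by (simp add: sets_pair_measure space_M)
  then show ?thesis
  proof (induction rule: sigma_sets.induct)
    case (Basic a) then show ?case using basic_case by auto
  next
    case Empty
    show ?case unfolding P2_def
      by (intro allI impI exI[of _ m] conjI) (auto intro!: exI[of _ "{}"] simp: sdiff_def U2_def)
  next
    case (Compl a)
    have "a \<in> sets MM" using Compl(1) by (simp add: sets_pair_measure space_M)
    then show ?case using compl_case Compl(2) by blast
  next
    case (Union A)
    have "A i \<in> sets MM" for i using Union(1) by (simp add: sets_pair_measure space_M)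
    then show ?case using union_case Union(2) by blast
  qed
qed

end

context rk begin

lemma emeasure_iv: "iv t i \<subseteq> X \<Longrightarrow> emeasure M (iv t i) = ennreal (w t)"
proof -
  assume "iv t i \<subseteq> X"
  then have "emeasure M (iv t i) = emeasure lebesgue (iv t i)" by (rule emeasure_M)
  also have "\<dots> = ennreal (real (Suc i) * w t - real i * w t)"
    unfolding iv_def using w_pos[of t] by (intro emeasure_leb_Ico) (simp add: algebra_simps)
  also have "real (Suc i) * w t - real i * w t = w t" by (simp add: algebra_simps)
  finally show ?thesis .
qed

lemma iv_X: "m \<le> t \<Longrightarrow> i < Nt m t \<Longrightarrow> iv t i \<subseteq> X"
  using iv_sub_L L_X by blast

lemma measure_sq: "m \<le> t \<Longrightarrow> i < Nt m t \<Longrightarrow> j < Nt m t \<Longrightarrow> measure MM (iv t i \<times> iv t j) = (w t)^2"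
proof -
  assume mt: "m \<le> t" and i: "i < Nt m t" and j: "j < Nt m t"
  have "emeasure MM (iv t i \<times> iv t j) = ennreal (w t) * ennreal (w t)"
    using emeasure_MM_Times[OF iv_sets_M[OF mt i] iv_sets_M[OF mt j]] emeasure_iv[OF iv_X[OF mt i]]
      emeasure_iv[OF iv_X[OF mt j]] by simp
  also have "\<dots> = ennreal ((w t)^2)" using w_pos[of t] by (simp add: ennreal_mult power2_eq_square)
  finally show ?thesis by (rule measure_eq_emeasure_eq_ennreal[rotated]) simp
qed

lemma density:
  assumes A: "A \<in> sets MM" "A \<subseteq> K m" "0 < measure MM A" and Q: "infinite Q"
    and e: "0 < \<epsilon>" "\<epsilon> \<le> 1"
  shows "\<exists>t\<in>Q. m \<le> t \<and> (\<exists>i<Nt m t. \<exists>j<Nt m t. (1 - \<epsilon>) * (w t)^2 < measure MM (A \<inter> (iv t i \<times> iv t j)))"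
proof -
  define \<alpha> where "\<alpha> = measure MM A"
  define \<delta> where "\<delta> = \<epsilon> * \<alpha> / 4"
  have ap: "0 < \<alpha>" using A by (simp add: \<alpha>_def)
  have ea: "0 < \<epsilon> * \<alpha>" using ap e by simp
  have dp: "0 < \<delta>" using ea by (simp add: \<delta>_def)
  have "A \<inter> K m = A" using A by auto
  then have "P2 m A" using approx2[OF A(1), of m] by simp
  then obtain t0 where t0: "m \<le> t0" "\<forall>t\<ge>t0. \<exists>Z\<subseteq>{..<Nt m t} \<times> {..<Nt m t}. measure MM (sdiff A (U2 t Z)) < \<delta>"
    using dp unfolding P2_def by blast
  obtain t where t: "t \<in> Q" "t0 \<le> t" using Q unfolding infinite_nat_iff_unbounded_le by blast
  then have mt: "m \<le> t" using t0 by simp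
  obtain Z where Z: "Z \<subseteq> {..<Nt m t} \<times> {..<Nt m t}" "measure MM (sdiff A (U2 t Z)) < \<delta>"
    using t0(2) t by blast
  define F where "F = U2 t Z"
  define s where "s = (w t)^2"
  have sp: "0 \<le> s" by (simp add: s_def)
  have finZ: "finite Z" using Z(1) by (rule finite_subset) auto
  define sq where "sq p = iv t (fst p) \<times> iv t (snd p)" for p
  have sqs: "sq p \<in> sets MM" if "p \<in> Z" for p
    using that Z(1) iv_sets_M[OF mt] by (auto simp: sq_def)
  have sqK: "sq p \<subseteq> K m" if "p \<in> Z" for p
    using that Z(1) iv_sub_L[OF mt] by (force simp: sq_def K_def)
  have sqm: "measure MM (sq p) = s" if "p \<in> Z" for p
    using that Z(1) measure_sq[OF mt] by (auto simp: sq_def s_def)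
  have sqfin: "emeasure MM (sq p) \<noteq> \<infinity>" if "p \<in> Z" for p
    using sub_K_fmeas[OF sqs[OF that] sqK[OF that]] by (auto simp: fmeasurable_def)
  have Asqfin: "emeasure MM (A \<inter> sq p) \<noteq> \<infinity>" if "p \<in> Z" for p
  proof -
    have "A \<inter> sq p \<in> fmeasurable MM" using sqs[OF that] sqK[OF that] A(1) by (intro sub_K_fmeas) auto
    then show ?thesis by (auto simp: fmeasurable_def)
  qed
  have disj: "disjoint_family_on sq Z"
    unfolding disjoint_family_on_def
  proof (intro ballI impI)
    fix p p' assume "p \<in> Z" "p' \<in> Z" "p \<noteq> p'"
    show "sq p \<inter> sq p' = {}"
    proof (rule ccontr)
      assume "sq p \<inter> sq p' \<noteq> {}"
      then obtain z where "z \<in> sq p" "z \<in> sq p'" by blast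
      then have "fst p = fst p' \<and> snd p = snd p'" unfolding sq_def by (rule sq_unique)
      then show False using \<open>p \<noteq> p'\<close> by (simp add: prod_eq_iff)
    qed
  qed
  have F_eq: "F = (\<Union>p\<in>Z. sq p)" by (simp add: F_def U2_def sq_def)
  have Fs: "F \<in> sets MM" using U2_sets[OF mt Z(1)] by (simp add: F_def)
  have FK: "F \<subseteq> K m" using U2_sub[OF mt Z(1)] by (simp add: F_def)
  have mF: "measure MM F = real (card Z) * s"
  proof -
    have "measure MM F = (\<Sum>p\<in>Z. measure MM (sq p))"
      unfolding F_eq using finZ sqs disj sqfin
      by (intro measure_finite_Union) auto
    also have "\<dots> = (\<Sum>p\<in>Z. s)" using sqm by simp
    finally show ?thesis by simp
  qed
  show ?thesis
  proof (rule ccontr)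
    assume H: "\<not> ?thesis"
    have H': "measure MM (A \<inter> sq p) \<le> (1 - \<epsilon>) * s" if "p \<in> Z" for p
    proof -
      have "fst p < Nt m t" "snd p < Nt m t" using that Z(1) by auto
      then have "\<not> (1 - \<epsilon>) * (w t)^2 < measure MM (A \<inter> (iv t (fst p) \<times> iv t (snd p)))"
        using H t mt by blast
      then show ?thesis by (simp add: sq_def s_def not_less)
    qed
    have mAF: "measure MM (A \<inter> F) \<le> (1 - \<epsilon>) * measure MM F"
    proof -
      have "measure MM (A \<inter> F) = (\<Sum>p\<in>Z. measure MM (A \<inter> sq p))"
      proof -
        have disjA: "disjoint_family_on (\<lambda>p. A \<inter> sq p) Z"
          using disj unfolding disjoint_family_on_def by blast
        show ?thesis unfolding F_eq Int_UN_distrib using finZ sqs disjA Asqfin A(1)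
          by (intro measure_finite_Union) auto
      qed
      also have "\<dots> \<le> (\<Sum>p\<in>Z. (1 - \<epsilon>) * s)" using H' by (intro sum_mono) auto
      also have "\<dots> = (1 - \<epsilon>) * measure MM F" using mF by simp
      finally show ?thesis .
    qed
    have sd: "sdiff A F \<in> sets MM" using A(1) Fs by (auto simp: sdiff_def)
    have sdK: "sdiff A F \<subseteq> K m" using A(2) FK by (auto simp: sdiff_def)
    have mAmF: "measure MM (A - F) < \<delta>"
    proof -
      have "measure MM (A - F) \<le> measure MM (sdiff A F)"
        using A(1) Fs by (intro measure_mono_fmeasurable[OF _ _ sub_K_fmeas[OF sd sdK]]) (auto simp: sdiff_def)
      then show ?thesis using Z(2) by (simp add: F_def)
    qed
    have mFmA: "measure MM (F - A) < \<delta>"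
    proof -
      have "measure MM (F - A) \<le> measure MM (sdiff A F)"
        using A(1) Fs by (intro measure_mono_fmeasurable[OF _ _ sub_K_fmeas[OF sd sdK]]) (auto simp: sdiff_def)
      then show ?thesis using Z(2) by (simp add: F_def)
    qed
    have "\<alpha> \<le> measure MM (A \<inter> F) + measure MM (A - F)"
    proof -
      have "A = (A \<inter> F) \<union> (A - F)" by auto
      then have "\<alpha> = measure MM ((A \<inter> F) \<union> (A - F))" by (simp add: \<alpha>_def)
      also have "\<dots> \<le> measure MM (A \<inter> F) + measure MM (A - F)"
        using A(1) Fs by (intro measure_Un_le) auto
      finally show ?thesis .
    qed
    then have h1: "\<alpha> - \<delta> < measure MM (A \<inter> F)" using mAmF by simp
    have "measure MM F \<le> measure MM (A \<union> (F - A))"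
      using A Fs FK by (intro measure_mono_fmeasurable sub_K_fmeas) auto
    also have "\<dots> \<le> \<alpha> + measure MM (F - A)" unfolding \<alpha>_def using A(1) Fs by (intro measure_Un_le) auto
    finally have h2: "measure MM F < \<alpha> + \<delta>" using mFmA by simp
    have "(1 - \<epsilon>) * measure MM F \<le> (1 - \<epsilon>) * (\<alpha> + \<delta>)"
      using h2 e by (intro mult_left_mono) auto
    with h1 mAF have h3: "\<alpha> - \<delta> < (1 - \<epsilon>) * (\<alpha> + \<delta>)" by simp
    have "(1 - \<epsilon>) * (\<alpha> + \<delta>) = \<alpha> + \<delta> - \<epsilon> * \<alpha> - \<epsilon> * \<delta>" by (simp add: algebra_simps)
    moreover have "0 \<le> \<epsilon> * \<delta>" using e dp by simp
    ultimately have "\<epsilon> * \<alpha> < 2 * \<delta>" using h3 by linarith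
    then show False using ea by (simp add: \<delta>_def mult.commute)
  qed
qed

end

lemma funpow_pair:
  fixes f :: "'a \<Rightarrow> 'a" and g :: "'b \<Rightarrow> 'b"
  shows "((\<lambda>(x, y). (f x, g y)) ^^ k) = (\<lambda>(x, y). ((f ^^ k) x, (g ^^ k) y))"
proof (induction k)
  case 0 show ?case by (simp add: fun_eq_iff)
next
  case (Suc k)
  have "((\<lambda>(x, y). (f x, g y)) ^^ Suc k) = (\<lambda>(x, y). (f x, g y)) \<circ> ((\<lambda>(x, y). (f x, g y)) ^^ k)"
    by (rule funpow.simps(2))
  also have "\<dots> = (\<lambda>(x, y). ((f ^^ Suc k) x, (g ^^ Suc k) y))" unfolding Suc by (auto simp: fun_eq_iff)
  finally show ?case .
qed

lemma sw_back1: "0 < v \<Longrightarrow> sw u v x \<in> {u+v..<u+2 * v} \<Longrightarrow> x \<in> {u..<u+v}"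
  by (auto simp: sw_def split: if_splits)

lemma sw_back2: "0 < v \<Longrightarrow> sw u v x \<in> {u..<u+v} \<Longrightarrow> x \<in> {u+v..<u+2 * v}"
  by (auto simp: sw_def split: if_splits)

context rk begin

lemma pair_map_meas: "f \<in> measurable M M \<Longrightarrow> g \<in> measurable M M \<Longrightarrow> (\<lambda>(x, y). (f x, g y)) \<in> measurable MM MM"
proof -
  assume f: "f \<in> measurable M M" and g: "g \<in> measurable M M"
  have "(\<lambda>z. (f (fst z), g (snd z))) \<in> measurable MM MM"
    by (rule measurable_Pair[OF measurable_compose[OF measurable_fst f] measurable_compose[OF measurable_snd g]])
  moreover have "(\<lambda>(x, y). (f x, g y)) = (\<lambda>z. (f (fst z), g (snd z)))" by auto
  ultimately show ?thesis by simp
qed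

lemma recur:
  assumes F: "F \<in> measurable MM MM" and Phi: "\<Phi> \<in> measurable MM MM" and A: "A \<in> sets MM"
    and sets: "R \<in> sets MM" "R' \<in> sets MM" "Q0 \<in> sets MM"
    and subs: "R \<subseteq> Q0" "R' \<subseteq> Q0" "Q0 \<subseteq> K m"
    and mR': "measure MM R' = s / 16"
    and mQ: "measure MM (Q0 - A) < s / 32"
    and pres: "emeasure MM (\<Phi> -` (A \<inter> R') \<inter> space MM) = emeasure MM (A \<inter> R')"
    and bk: "\<Phi> -` (A \<inter> R') \<inter> space MM \<subseteq> R"
    and eq: "\<And>z. z \<in> R \<Longrightarrow> F z = \<Phi> z"
  shows "0 < emeasure MM (F -` A \<inter> A)"
proof -
  define G0 where "G0 = \<Phi> -` (A \<inter> R') \<inter> space MM"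
  have G0s: "G0 \<in> sets MM" unfolding G0_def using Phi A sets(2) by (intro measurable_sets) auto
  define G where "G = G0 - (R - A)"
  have Gs: "G \<in> sets MM" using G0s sets A by (auto simp: G_def)
  have QK: "\<And>E. E \<in> sets MM \<Longrightarrow> E \<subseteq> Q0 \<Longrightarrow> E \<in> fmeasurable MM"
    using subs by (intro sub_K_fmeas) auto
  have G0Q: "G0 \<subseteq> Q0" using bk subs by (auto simp: G0_def)
  have "G \<subseteq> F -` A \<inter> A"
  proof
    fix z assume z: "z \<in> G"
    then have zR: "z \<in> R" and zA: "z \<in> A" and "\<Phi> z \<in> A" using bk by (auto simp: G_def G0_def)
    then show "z \<in> F -` A \<inter> A" using eq[OF zR] by simp
  qed
  moreover have FAs: "F -` A \<inter> A \<in> sets MM"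
  proof -
    have "F -` A \<inter> space MM \<in> sets MM" using F A by (rule measurable_sets)
    moreover have "F -` A \<inter> A = (F -` A \<inter> space MM) \<inter> A" using sets.sets_into_space[OF A] by auto
    ultimately show ?thesis using A by auto
  qed
  ultimately have le: "emeasure MM G \<le> emeasure MM (F -` A \<inter> A)" by (intro emeasure_mono) auto
  have QAf: "Q0 - A \<in> fmeasurable MM" using sets A by (intro QK) auto
  have "measure MM (R - A) \<le> measure MM (Q0 - A)"
    using subs sets A by (intro measure_mono_fmeasurable[OF _ _ QAf]) auto
  then have RA: "measure MM (R - A) < s/32" using mQ by simp
  have "measure MM (R' - A) \<le> measure MM (Q0 - A)"
    using subs sets A by (intro measure_mono_fmeasurable[OF _ _ QAf]) auto
  then have R'A: "measure MM (R' - A) < s/32" using mQ by simp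
  have "measure MM R' \<le> measure MM (A \<inter> R') + measure MM (R' - A)"
  proof -
    have "R' = (A \<inter> R') \<union> (R' - A)" by auto
    then have "measure MM R' = measure MM ((A \<inter> R') \<union> (R' - A))" by simp
    also have "\<dots> \<le> measure MM (A \<inter> R') + measure MM (R' - A)" using A sets by (intro measure_Un_le) auto
    finally show ?thesis .
  qed
  then have mAR: "s/16 - s/32 < measure MM (A \<inter> R')" using mR' R'A by simp
  have mG0: "measure MM G0 = measure MM (A \<inter> R')" using pres by (simp add: G0_def measure_def)
  have "measure MM G0 \<le> measure MM (G \<union> (R - A))"
    using G0s Gs sets A G0Q subs by (intro measure_mono_fmeasurable QK) (auto simp: G_def)
  also have "\<dots> \<le> measure MM G + measure MM (R - A)" using Gs sets A by (intro measure_Un_le) auto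
  finally have "0 < measure MM G" using mG0 mAR RA by simp
  moreover have "G \<subseteq> Q0" using G0Q by (auto simp: G_def)
  ultimately have "0 < emeasure MM G" using emeasure_eq_measure2[OF QK[OF Gs]] by simp
  then show ?thesis using le by simp
qed

end

context rk begin

lemma level_off: "r < 4 \<Longrightarrow> j < H t \<Longrightarrow>
   level (Suc t) (off t r + j) = {lev t j + real r * w (Suc t) ..< lev t j + real r * w (Suc t) + w (Suc t)}"
proof -
  assume "r < 4" "j < H t"
  then have "lev (Suc t) (off t r + j) = lev t j + real r * w (Suc t)" by (rule lev_off)
  then show ?thesis by (simp only: rk_level_def)
qed

lemma off_vals: "off t 0 = 0" "off t 1 = H t + a t" "off t 2 = 2 * H t + a t + b t" "off t 3 = 3 * H t + a t + b t + c t"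
  by (auto simp: off_def)

lemma Ico_M: "{x..<y} \<subseteq> X \<Longrightarrow> {x..<y} \<in> sets M"
  by (simp add: sets_M)

lemma emeasure_Ico_M: "0 \<le> v \<Longrightarrow> {x..<x+v} \<subseteq> X \<Longrightarrow> emeasure M {x..<x+v} = ennreal v"
  by (simp add: emeasure_M)

lemma geo:
  assumes i0: "i0 < H t" and j0: "j0 < H t"
  defines "v \<equiv> w (Suc t)" and "u \<equiv> lev t i0" and "u' \<equiv> lev t j0 + 2 * w (Suc t)"
  shows "0 < v" "w t = 4 * v"
    "{u..<u + 2 * v} \<subseteq> level t i0" "{u'..<u' + 2 * v} \<subseteq> level t j0"
    "level t i0 \<subseteq> X" "level t j0 \<subseteq> X"
    "\<And>x. x \<in> {u..<u+v} \<Longrightarrow> (T ^^ (H t + a t)) x = x + v"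
    "\<And>x. x \<in> {u+v..<u+2 * v} \<Longrightarrow> (Ti ^^ (H t + a t)) x = x - v"
    "\<And>y. y \<in> {u'..<u'+v} \<Longrightarrow> (T ^^ (H t + c t)) y = y + v"
proof -
  show vp: "0 < v" by (simp add: v_def w_pos)
  show w4: "w t = 4 * v" by (simp add: v_def w_Suc)
  show "{u..<u + 2 * v} \<subseteq> level t i0" using w4 vp by (auto simp: u_def rk_level_def)
  show "{u'..<u' + 2 * v} \<subseteq> level t j0" using w4 vp by (auto simp: u'_def rk_level_def v_def)
  show "level t i0 \<subseteq> X" by (rule level_X[OF i0])
  show "level t j0 \<subseteq> X" by (rule level_X[OF j0])
  have L0: "lev (Suc t) i0 = u" using lev_off[of 0 i0 t] i0 by (simp add: off_vals u_def)
  have L1: "lev (Suc t) (i0 + (H t + a t)) = u + v"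
    using lev_off[of 1 i0 t] i0 by (simp add: off_vals u_def v_def add.commute)
  have L2: "lev (Suc t) (off t 2 + j0) = u'"
    using lev_off[of 2 j0 t] j0 by (simp add: u'_def v_def)
  have L3: "lev (Suc t) (off t 2 + j0 + (H t + c t)) = u' + v"
  proof -
    have e: "off t 2 + j0 + (H t + c t) = off t 3 + j0" by (simp add: off_vals)
    have "lev (Suc t) (off t 3 + j0) = lev t j0 + real 3 * w (Suc t)" by (rule lev_off) (use j0 in auto)
    then show ?thesis by (simp only: e) (simp add: u'_def v_def)
  qed
  show "(T ^^ (H t + a t)) x = x + v" if x: "x \<in> {u..<u+v}" for x
  proof -
    have xl: "x \<in> level (Suc t) i0" using x L0 by (simp add: rk_level_def v_def)
    have hlt: "i0 + (H t + a t) < H (Suc t)" using i0 by simp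
    have "(T ^^ (H t + a t)) x = x - lev (Suc t) i0 + lev (Suc t) (i0 + (H t + a t))"
      by (rule T_pow[OF xl hlt])
    then show ?thesis using L0 L1 by (simp del: rk_lev.simps)
  qed
  show "(Ti ^^ (H t + a t)) x = x - v" if x: "x \<in> {u+v..<u+2 * v}" for x
  proof -
    have xl: "x \<in> level (Suc t) (i0 + (H t + a t))" using x L1 by (simp add: rk_level_def v_def)
    have hlt: "i0 + (H t + a t) < H (Suc t)" using i0 by simp
    have kle: "H t + a t \<le> i0 + (H t + a t)" by simp
    have e: "i0 + (H t + a t) - (H t + a t) = i0" by simp
    have "(Ti ^^ (H t + a t)) x = x - lev (Suc t) (i0 + (H t + a t)) + lev (Suc t) (i0 + (H t + a t) - (H t + a t))"
      by (rule Ti_pow[OF xl hlt kle])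
    then show ?thesis using e L0 L1 by (simp del: rk_lev.simps)
  qed
  show "(T ^^ (H t + c t)) y = y + v" if y: "y \<in> {u'..<u'+v}" for y
  proof -
    have yl: "y \<in> level (Suc t) (off t 2 + j0)" using y L2 by (simp add: rk_level_def v_def)
    have hlt: "off t 2 + j0 + (H t + c t) < H (Suc t)" using j0 dp[of t] by (simp add: off_vals)
    have "(T ^^ (H t + c t)) y = y - lev (Suc t) (off t 2 + j0) + lev (Suc t) (off t 2 + j0 + (H t + c t))"
      by (rule T_pow[OF yl hlt])
    then show ?thesis using L2 L3 by (simp del: rk_lev.simps)
  qed
qed

end

context rk begin

lemma XX_K: "X \<times> X \<subseteq> (\<Union>m. K m)"
proof
  fix z assume "z \<in> X \<times> X"
  then obtain x y where z: "z = (x, y)" "x \<in> X" "y \<in> X" by auto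
  then obtain n1 n2 where "0 \<le> x" "x < S n1" "0 \<le> y" "y < S n2" by (auto simp: X_eq)
  moreover have "S n1 \<le> S (max n1 n2)" "S n2 \<le> S (max n1 n2)" by (auto intro: S_mono)
  ultimately have "z \<in> K (max n1 n2)" using z by (auto simp: K_def L_def)
  then show "z \<in> (\<Union>m. K m)" by blast
qed

lemma key:
  assumes A: "A \<in> sets MM" "0 < emeasure MM A" and Qinf: "infinite Qs"
  shows "\<exists>m t i0 j0. t \<in> Qs \<and> i0 < H t \<and> j0 < H t \<and> level t i0 \<times> level t j0 \<subseteq> K m \<and>
          measure MM ((level t i0 \<times> level t j0) - A) < (w t)^2 / 32"
proof -
  have "\<exists>m. 0 < emeasure MM (A \<inter> K m)"
  proof (rule ccontr)
    assume "\<not> ?thesis"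
    then have "A \<inter> K m \<in> null_sets MM" for m using A(1) K_sets by (auto simp: null_sets_def)
    then have "(\<Union>m. A \<inter> K m) \<in> null_sets MM" by blast
    moreover have "(\<Union>m. A \<inter> K m) = A" using sets.sets_into_space[OF A(1)] XX_K space_MM by auto
    ultimately show False using A(2) by (simp add: null_sets_def)
  qed
  then obtain m where m: "0 < emeasure MM (A \<inter> K m)" by blast
  define A' where "A' = A \<inter> K m"
  have A's: "A' \<in> sets MM" using A(1) K_sets by (simp add: A'_def)
  have A'K: "A' \<subseteq> K m" by (simp add: A'_def)
  have A'f: "A' \<in> fmeasurable MM" by (rule sub_K_fmeas[OF A's A'K])
  have "0 < measure MM A'" using m emeasure_eq_measure2[OF A'f] by (simp add: A'_def)
  then obtain t i j where t: "t \<in> Qs" "m \<le> t" and ij: "i < Nt m t" "j < Nt m t"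
    and dens: "(1 - 1/32) * (w t)^2 < measure MM (A' \<inter> (iv t i \<times> iv t j))"
    using density[OF A's A'K _ Qinf, of "1/32"] by auto
  have NH: "Nt m t \<le> H t"
  proof -
    have "real (Nt m t) * w t \<le> real (H t) * w t" using S_Nt[OF t(2)] S_eq[of t] S_mono[OF t(2)] by simp
    then show ?thesis using w_pos[of t] by (simp add: mult_le_cancel_right)
  qed
  obtain i0 where i0: "i0 < H t" "pp t i0 = i" using pi_surj[of i t] ij NH by auto
  obtain j0 where j0: "j0 < H t" "pp t j0 = j" using pi_surj[of j t] ij NH by auto
  define Q0 where "Q0 = iv t i \<times> iv t j"
  have QL: "level t i0 \<times> level t j0 = Q0" using i0 j0 by (simp add: Q0_def level_iv)
  have Q0K: "Q0 \<subseteq> K m" using iv_sub_L[OF t(2) ij(1)] iv_sub_L[OF t(2) ij(2)] by (auto simp: Q0_def K_def)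
  have Q0s: "Q0 \<in> sets MM" using iv_sets_M[OF t(2) ij(1)] iv_sets_M[OF t(2) ij(2)] by (simp add: Q0_def)
  have mQ0: "measure MM Q0 = (w t)^2" using measure_sq[OF t(2) ij] by (simp add: Q0_def)
  have eq: "Q0 - A = Q0 - (A' \<inter> Q0)" using Q0K by (auto simp: A'_def)
  have m1: "measure MM (Q0 - (A' \<inter> Q0)) = measure MM Q0 - measure MM (A' \<inter> Q0)"
    using Q0s A's sub_K_fmeas[OF Q0s Q0K] by (intro measure_Diff) (auto simp: fmeasurable_def)
  have "measure MM (Q0 - A) = (w t)^2 - measure MM (A' \<inter> (iv t i \<times> iv t j))"
    unfolding eq m1 mQ0 by (simp add: Q0_def)
  then have "measure MM (Q0 - A) < (w t)^2 / 32" using dens by simp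
  then show ?thesis using t i0 j0 QL Q0K by (intro exI[of _ m] exI[of _ t] exI[of _ i0] exI[of _ j0]) auto
qed

end

lemma sw_val1: "x \<in> {u..<u+v} \<Longrightarrow> sw u v x = x + v"
  by (simp add: sw_def)

lemma sw_val2: "0 < v \<Longrightarrow> x \<in> {u+v..<u+2 * v} \<Longrightarrow> sw u v x = x - v"
  by (auto simp: sw_def)

context rk begin

lemma case_T:
  assumes A: "A \<in> sets MM" and i0: "i0 < H t" and j0: "j0 < H t"
    and QK: "level t i0 \<times> level t j0 \<subseteq> K m"
    and mQ: "measure MM ((level t i0 \<times> level t j0) - A) < (w t)^2 / 32"
    and pk: "p * k = H t + a t" and qk: "q * k = H t + c t"
  shows "0 < emeasure MM (((\<lambda>(x, y). ((T ^^ p) x, (T ^^ q) y)) ^^ k) -` A \<inter> A)"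
proof -
  define v where "v = w (Suc t)"
  define u where "u = lev t i0"
  define u' where "u' = lev t j0 + 2 * w (Suc t)"
  note g = geo[OF i0 j0, folded v_def u_def u'_def]
  have vp: "0 < v" using g(1) .
  define F where "F = ((\<lambda>(x, y). ((T ^^ p) x, (T ^^ q) y)) ^^ k)"
  have Feq: "F = (\<lambda>(x, y). ((T ^^ (H t + a t)) x, (T ^^ (H t + c t)) y))"
    unfolding F_def funpow_pair funpow_mult pk qk by simp
  define \<Phi> where "\<Phi> = (\<lambda>(x, y). (sw u v x, sw u' v y))"
  define R where "R = {u..<u+v} \<times> {u'..<u'+v}"
  define R' where "R' = {u+v..<u+2 * v} \<times> {u'+v..<u'+2 * v}"
  define Q0 where "Q0 = level t i0 \<times> level t j0"
  have IX: "{u..<u + 2 * v} \<subseteq> X" using g(3,5) by blast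
  have JX: "{u'..<u' + 2 * v} \<subseteq> X" using g(4,6) by blast
  have Fm: "F \<in> measurable MM MM"
    unfolding F_def by (intro funpow_meas pair_map_meas T_meas)
  have Pm: "\<Phi> \<in> measurable MM MM"
    unfolding \<Phi>_def by (intro pair_map_meas sw_meas vp IX JX)
  have I1: "{u..<u+v} \<subseteq> X" "{u+v..<u+2 * v} \<subseteq> X" using IX vp by auto
  have J1: "{u'..<u'+v} \<subseteq> X" "{u'+v..<u'+2 * v} \<subseteq> X" using JX vp by auto
  have Rs: "R \<in> sets MM" unfolding R_def using I1 J1 by (intro pair_measureI Ico_M) auto
  have R's: "R' \<in> sets MM" unfolding R'_def using I1 J1 by (intro pair_measureI Ico_M) auto
  have Q0s: "Q0 \<in> sets MM" unfolding Q0_def using g(5,6) level_sets by (auto simp: sets_M)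
  have a1: "{u..<u+v} \<subseteq> level t i0" by (rule subset_trans[OF _ g(3)]) (use vp in auto)
  have a2: "{u+v..<u+2 * v} \<subseteq> level t i0" by (rule subset_trans[OF _ g(3)]) (use vp in auto)
  have b1: "{u'..<u'+v} \<subseteq> level t j0" by (rule subset_trans[OF _ g(4)]) (use vp in auto)
  have b2: "{u'+v..<u'+2 * v} \<subseteq> level t j0" by (rule subset_trans[OF _ g(4)]) (use vp in auto)
  have RQ: "R \<subseteq> Q0" unfolding R_def Q0_def using a1 a2 b1 b2 by blast
  have R'Q: "R' \<subseteq> Q0" unfolding R'_def Q0_def using a1 a2 b1 b2 by blast
  have mR': "measure MM R' = (w t)^2 / 16"
  proof -
    have e1: "emeasure M {u+v..<u+2 * v} = ennreal v"
      using emeasure_Ico_M[of v "u+v"] I1 vp by (simp add: algebra_simps)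
    have e2: "emeasure M {u'+v..<u'+2 * v} = ennreal v"
      using emeasure_Ico_M[of v "u'+v"] J1 vp by (simp add: algebra_simps)
    have "emeasure MM R' = ennreal v * ennreal v"
      unfolding R'_def using emeasure_MM_Times[OF Ico_M[OF I1(2)] Ico_M[OF J1(2)]] e1 e2 by simp
    also have "\<dots> = ennreal ((w t)^2 / 16)" using vp g(2) by (simp add: ennreal_mult power2_eq_square)
    finally show ?thesis by (rule measure_eq_emeasure_eq_ennreal[rotated]) simp
  qed
  have pres: "emeasure MM (\<Phi> -` (A \<inter> R') \<inter> space MM) = emeasure MM (A \<inter> R')"
    unfolding \<Phi>_def by (rule pair_sw[OF vp IX vp JX]) (use A R's in auto)
  have bk: "\<Phi> -` (A \<inter> R') \<inter> space MM \<subseteq> R"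
  proof
    fix z assume z: "z \<in> \<Phi> -` (A \<inter> R') \<inter> space MM"
    obtain x y where xy: "z = (x, y)" by (cases z)
    have "sw u v x \<in> {u+v..<u+2 * v}" "sw u' v y \<in> {u'+v..<u'+2 * v}"
      using z xy unfolding \<Phi>_def R'_def by auto
    then have "x \<in> {u..<u+v}" "y \<in> {u'..<u'+v}" using sw_back1[OF vp] by blast+
    then show "z \<in> R" using xy by (simp add: R_def)
  qed
  have eq: "F z = \<Phi> z" if zR: "z \<in> R" for z
  proof -
    obtain x y where z: "z = (x, y)" "x \<in> {u..<u+v}" "y \<in> {u'..<u'+v}"
      using zR unfolding R_def by (cases z) blast
    show ?thesis using z g(7)[OF z(2)] g(9)[OF z(3)] sw_val1[OF z(2)] sw_val1[OF z(3)]
      by (simp add: Feq \<Phi>_def)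
  qed
  show ?thesis
    using recur[OF Fm Pm A Rs R's Q0s RQ R'Q QK[folded Q0_def] mR' mQ[folded Q0_def] pres bk eq]
    unfolding F_def .
qed

lemma case_Ti:
  assumes A: "A \<in> sets MM" and i0: "i0 < H t" and j0: "j0 < H t"
    and QK: "level t i0 \<times> level t j0 \<subseteq> K m"
    and mQ: "measure MM ((level t i0 \<times> level t j0) - A) < (w t)^2 / 32"
    and pk: "p * k = H t + a t" and qk: "q * k = H t + c t"
  shows "0 < emeasure MM (((\<lambda>(x, y). ((Ti ^^ p) x, (T ^^ q) y)) ^^ k) -` A \<inter> A)"
proof -
  define v where "v = w (Suc t)"
  define u where "u = lev t i0"
  define u' where "u' = lev t j0 + 2 * w (Suc t)"
  note g = geo[OF i0 j0, folded v_def u_def u'_def]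
  have vp: "0 < v" using g(1) .
  define F where "F = ((\<lambda>(x, y). ((Ti ^^ p) x, (T ^^ q) y)) ^^ k)"
  have Feq: "F = (\<lambda>(x, y). ((Ti ^^ (H t + a t)) x, (T ^^ (H t + c t)) y))"
    unfolding F_def funpow_pair funpow_mult pk qk by simp
  define \<Phi> where "\<Phi> = (\<lambda>(x, y). (sw u v x, sw u' v y))"
  define R where "R = {u+v..<u+2 * v} \<times> {u'..<u'+v}"
  define R' where "R' = {u..<u+v} \<times> {u'+v..<u'+2 * v}"
  define Q0 where "Q0 = level t i0 \<times> level t j0"
  have IX: "{u..<u + 2 * v} \<subseteq> X" using g(3,5) by blast
  have JX: "{u'..<u' + 2 * v} \<subseteq> X" using g(4,6) by blast
  have Fm: "F \<in> measurable MM MM"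
    unfolding F_def by (intro funpow_meas pair_map_meas T_meas Ti_meas)
  have Pm: "\<Phi> \<in> measurable MM MM"
    unfolding \<Phi>_def by (intro pair_map_meas sw_meas vp IX JX)
  have I1: "{u..<u+v} \<subseteq> X" "{u+v..<u+2 * v} \<subseteq> X" using IX vp by auto
  have J1: "{u'..<u'+v} \<subseteq> X" "{u'+v..<u'+2 * v} \<subseteq> X" using JX vp by auto
  have Rs: "R \<in> sets MM" unfolding R_def using I1 J1 by (intro pair_measureI Ico_M) auto
  have R's: "R' \<in> sets MM" unfolding R'_def using I1 J1 by (intro pair_measureI Ico_M) auto
  have Q0s: "Q0 \<in> sets MM" unfolding Q0_def using g(5,6) level_sets by (auto simp: sets_M)
  have a1: "{u..<u+v} \<subseteq> level t i0" by (rule subset_trans[OF _ g(3)]) (use vp in auto)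
  have a2: "{u+v..<u+2 * v} \<subseteq> level t i0" by (rule subset_trans[OF _ g(3)]) (use vp in auto)
  have b1: "{u'..<u'+v} \<subseteq> level t j0" by (rule subset_trans[OF _ g(4)]) (use vp in auto)
  have b2: "{u'+v..<u'+2 * v} \<subseteq> level t j0" by (rule subset_trans[OF _ g(4)]) (use vp in auto)
  have RQ: "R \<subseteq> Q0" unfolding R_def Q0_def using a1 a2 b1 b2 by blast
  have R'Q: "R' \<subseteq> Q0" unfolding R'_def Q0_def using a1 a2 b1 b2 by blast
  have mR': "measure MM R' = (w t)^2 / 16"
  proof -
    have e1: "emeasure M {u..<u+v} = ennreal v"
      using emeasure_Ico_M[of v u] I1 vp by simp
    have e2: "emeasure M {u'+v..<u'+2 * v} = ennreal v"
      using emeasure_Ico_M[of v "u'+v"] J1 vp by (simp add: algebra_simps)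
    have "emeasure MM R' = ennreal v * ennreal v"
      unfolding R'_def using emeasure_MM_Times[OF Ico_M[OF I1(1)] Ico_M[OF J1(2)]] e1 e2 by simp
    also have "\<dots> = ennreal ((w t)^2 / 16)" using vp g(2) by (simp add: ennreal_mult power2_eq_square)
    finally show ?thesis by (rule measure_eq_emeasure_eq_ennreal[rotated]) simp
  qed
  have pres: "emeasure MM (\<Phi> -` (A \<inter> R') \<inter> space MM) = emeasure MM (A \<inter> R')"
    unfolding \<Phi>_def by (rule pair_sw[OF vp IX vp JX]) (use A R's in auto)
  have bk: "\<Phi> -` (A \<inter> R') \<inter> space MM \<subseteq> R"
  proof
    fix z assume z: "z \<in> \<Phi> -` (A \<inter> R') \<inter> space MM"
    obtain x y where xy: "z = (x, y)" by (cases z)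
    have "sw u v x \<in> {u..<u+v}" "sw u' v y \<in> {u'+v..<u'+2 * v}"
      using z xy unfolding \<Phi>_def R'_def by auto
    then have "x \<in> {u+v..<u+2 * v}" "y \<in> {u'..<u'+v}" using sw_back1[OF vp] sw_back2[OF vp] by blast+
    then show "z \<in> R" using xy by (simp add: R_def)
  qed
  have eq: "F z = \<Phi> z" if zR: "z \<in> R" for z
  proof -
    obtain x y where z: "z = (x, y)" "x \<in> {u+v..<u+2 * v}" "y \<in> {u'..<u'+v}"
      using zR unfolding R_def by (cases z) blast
    show ?thesis using z g(8)[OF z(2)] g(9)[OF z(3)] sw_val2[OF vp z(2)] sw_val1[OF z(3)]
      by (simp add: Feq \<Phi>_def)
  qed
  show ?thesis
    using recur[OF Fm Pm A Rs R's Q0s RQ R'Q QK[folded Q0_def] mR' mQ[folded Q0_def] pres bk eq]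
    unfolding F_def .
qed

end

context rk begin

lemma main_rk:
  assumes pq: "0 < p" "0 < q" and Qinf: "infinite Qs"
    and Qk: "\<And>n. n \<in> Qs \<Longrightarrow> \<exists>k. rk_p a b c d n = k * p \<and> rk_q a b c d n = k * q"
  shows "conservative MM (\<lambda>(x, y). ((T ^^ p) x, (T ^^ q) y))
       \<and> conservative MM (\<lambda>(x, y). ((Ti ^^ p) x, (T ^^ q) y))"
proof -
  have gen: "\<exists>k t i0 j0 m. 1 \<le> k \<and> i0 < H t \<and> j0 < H t \<and> level t i0 \<times> level t j0 \<subseteq> K m \<and>
      measure MM ((level t i0 \<times> level t j0) - A) < (w t)^2 / 32 \<and> p * k = H t + a t \<and> q * k = H t + c t"
    if A: "A \<in> sets MM" "0 < emeasure MM A" for A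
  proof -
    obtain m t i0 j0 where k: "t \<in> Qs" "i0 < H t" "j0 < H t" "level t i0 \<times> level t j0 \<subseteq> K m"
      "measure MM ((level t i0 \<times> level t j0) - A) < (w t)^2 / 32"
      using key[OF A Qinf] by blast
    obtain k where kk: "rk_p a b c d t = k * p" "rk_q a b c d t = k * q" using Qk[OF k(1)] by blast
    have pk: "p * k = H t + a t" using kk(1) by (simp add: rk_p_def mult.commute)
    have qk: "q * k = H t + c t" using kk(2) by (simp add: rk_q_def mult.commute)
    have "k \<noteq> 0"
    proof
      assume "k = 0" then have "H t + a t = 0" using pk by simp
      then show False using H_pos[of t] by simp
    qed
    then show ?thesis using k pk qk by (intro exI[of _ k] exI[of _ t] exI[of _ i0] exI[of _ j0] exI[of _ m]) auto
  qed
  show ?thesis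
    unfolding conservative_def
  proof (intro conjI ballI impI)
    fix A assume A: "A \<in> sets MM" "0 < emeasure MM A"
    then obtain k t i0 j0 m where g: "1 \<le> k" "i0 < H t" "j0 < H t" "level t i0 \<times> level t j0 \<subseteq> K m"
      "measure MM ((level t i0 \<times> level t j0) - A) < (w t)^2 / 32" "p * k = H t + a t" "q * k = H t + c t"
      using gen by metis
    show "\<exists>n\<ge>1. 0 < emeasure MM (((\<lambda>(x, y). ((T ^^ p) x, (T ^^ q) y)) ^^ n) -` A \<inter> A)"
      using case_T[OF A(1) g(2,3,4,5,6,7)] g(1) by blast
  next
    fix A assume A: "A \<in> sets MM" "0 < emeasure MM A"
    then obtain k t i0 j0 m where g: "1 \<le> k" "i0 < H t" "j0 < H t" "level t i0 \<times> level t j0 \<subseteq> K m"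
      "measure MM ((level t i0 \<times> level t j0) - A) < (w t)^2 / 32" "p * k = H t + a t" "q * k = H t + c t"
      using gen by metis
    show "\<exists>n\<ge>1. 0 < emeasure MM (((\<lambda>(x, y). ((Ti ^^ p) x, (T ^^ q) y)) ^^ n) -` A \<inter> A)"
      using case_Ti[OF A(1) g(2,3,4,5,6,7)] g(1) by blast
  qed
qed

end

theorem mainTheorem2:
  fixes a b c d :: "nat \<Rightarrow> nat" and p q :: nat
  assumes pos: "\<And>n. a n > 0" "\<And>n. b n > 0" "\<And>n. c n > 0" "\<And>n. d n > 0"
    and W: "in_W a b c d"
    and pq: "p > 0" "q > 0"
    and inf: "infinite {n. \<exists>k::nat. real (rk_q a b c d n) / real q = real k
                                  \<and> real (rk_p a b c d n) / real p = real k}"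
  shows "conservative (rk_M a b c d \<Otimes>\<^sub>M rk_M a b c d)
           (\<lambda>(x, y). ((rk_T a b c d ^^ p) x, (rk_T a b c d ^^ q) y))
       \<and> conservative (rk_M a b c d \<Otimes>\<^sub>M rk_M a b c d)
           (\<lambda>(x, y). ((rk_Tinv a b c d ^^ p) x, (rk_T a b c d ^^ q) y))"
proof -
  interpret rk a b c d using pos by unfold_locales auto
  let ?Q = "{n. \<exists>k::nat. real (rk_q a b c d n) / real q = real k \<and> real (rk_p a b c d n) / real p = real k}"
  have Qk: "\<exists>k. rk_p a b c d n = k * p \<and> rk_q a b c d n = k * q" if nQ: "n \<in> ?Q" for n
  proof -
    obtain k :: nat where k: "real (rk_q a b c d n) / real q = real k" "real (rk_p a b c d n) / real p = real k"
      using nQ by blast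
    have "real (rk_p a b c d n) = real k * real p" using k(2) pq by (simp add: field_simps)
    then have "rk_p a b c d n = k * p" by (metis of_nat_eq_iff of_nat_mult)
    moreover have "real (rk_q a b c d n) = real k * real q" using k(1) pq by (simp add: field_simps)
    then have "rk_q a b c d n = k * q" by (metis of_nat_eq_iff of_nat_mult)
    ultimately show ?thesis by blast
  qed
  show ?thesis by (rule main_rk[OF pq inf Qk])
qed


end
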